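(* On the multiple-access channel, there is a symmetric stable protocol for each injection rate $\lambda<1/\mathrm{e}$.
   Context: Multiple-access channel: a set of stations share a single channel; in a time slot, a transmission is successful iff exactly one station transmits. Packets arrive over time at stations, either stochastically (finitely many independent generators, each injecting at most one packet per slot, with time-invariant distributions) or by a $(w,\lambda)$-bounded adversary; the injection rate is the expected number of packets injected per slot (stochastic case), respectively the adversary may inject at most $\lambda w$ packets in any $w$ consecutive slots. Symmetric: all stations run the same protocol and have no individual ids. Stable: expected queue lengths are bounded at all times and expected latency is bounded. *)

theory Defs
  imports "HOL-Probability.Probability"
begin

(* Multiple-access channel with stations 0..<n, stochastic injection by finitely many
   independent generators, symmetric protocols (every station runs the same protocol
   from the same initial state; no identifiers are visible to the protocol).

   A packet is identified by (injection slot, generator index); this is unique since a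
   generator injects at most one packet per slot. Queues are FIFO lists of packets. *)

type_synonym pkt = "nat \<times> nat"
type_synonym lstate = "nat \<times> pkt list"     (* local protocol state, packet queue *)
type_synonym gstate = "nat \<Rightarrow> lstate"

(* A symmetric protocol (countable local state space, encoded in nat).
   mp_act s q : random action given local state s and queue length q:
                None = stay silent, Some m = transmit (with control bits m).
   mp_upd s a fb k : new local state after the slot, given own action a,
                channel feedback fb (Some m = a successful transmission carrying
                control bits m was heard; None = silence or collision, which are
                indistinguishable), and number k of packets newly injected at the station. *)
record mac_protocol =
  mp_init :: nat
  mp_act :: "nat \<Rightarrow> nat \<Rightarrow> nat option pmf"
  mp_upd :: "nat \<Rightarrow> nat option \<Rightarrow> nat option \<Rightarrow> nat \<Rightarrow> nat"

(* Generators: a list gs of per-slot distributions; gs!g yields None (no injection) or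
   Some i (inject one packet at station i). Independent across generators and slots,
   and time invariant. *)
definition valid_gens :: "nat \<Rightarrow> nat option pmf list \<Rightarrow> bool" where
  "valid_gens n gs \<longleftrightarrow> (\<forall>g < length gs. \<forall>i. Some i \<in> set_pmf (gs ! g) \<longrightarrow> i < n)"

definition inj_rate :: "nat option pmf list \<Rightarrow> real" where
  "inj_rate gs = (\<Sum>g<length gs. measure_pmf.prob (gs ! g) {x. x \<noteq> None})"

(* Packets injected during
   slot t join the queues at the end of the slot. *)
definition mac_step :: "mac_protocol \<Rightarrow> nat \<Rightarrow> nat option pmf list \<Rightarrow> nat \<Rightarrow> gstate \<Rightarrow> gstate pmf" where
  "mac_step P n gs t \<sigma> =
     Pi_pmf {..<n} None (\<lambda>i. mp_act P (fst (\<sigma> i)) (length (snd (\<sigma> i)))) \<bind> (\<lambda>a.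
     Pi_pmf {..<length gs} None (\<lambda>g. gs ! g) \<bind> (\<lambda>r.
     (let T = {i. i < n \<and> a i \<noteq> None};
          fb = (if card T = 1 then a (the_elem T) else None)
      in return_pmf (\<lambda>i. if i < n then
            (mp_upd P (fst (\<sigma> i)) (a i) fb (card {g. g < length gs \<and> r g = Some i}),
             (if T = {i} then tl (snd (\<sigma> i)) else snd (\<sigma> i))
               @ map (\<lambda>g. (t, g)) (filter (\<lambda>g. r g = Some i) [0..<length gs]))
          else \<sigma> i))))"

fun mac_run :: "mac_protocol \<Rightarrow> nat \<Rightarrow> nat option pmf list \<Rightarrow> nat \<Rightarrow> gstate pmf" where
  "mac_run P n gs 0 = return_pmf (\<lambda>i. (mp_init P, []))"
| "mac_run P n gs (Suc t) = mac_run P n gs t \<bind> mac_step P n gs t"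

(* Stability: expected queue lengths bounded at all times, and the expected latency
   of every packet (conditional on its injection) is bounded by a common constant L.
   The packet (s,g) is injected in slot s and is present in the system at times
   s+1, ..., s+latency, so E[latency ; injected] = sum_k P(present at time s+1+k). *)
definition mac_stable :: "mac_protocol \<Rightarrow> nat \<Rightarrow> nat option pmf list \<Rightarrow> bool" where
  "mac_stable P n gs \<longleftrightarrow>
     (\<exists>B::real. \<forall>t. \<forall>i<n.
        (\<integral>\<^sup>+ \<sigma>. ennreal (real (length (snd (\<sigma> i)))) \<partial>measure_pmf (mac_run P n gs t)) \<le> ennreal B)
   \<and> (\<exists>L::real. \<forall>s. \<forall>g<length gs. \<forall>K.
        (\<Sum>k<K. measure_pmf.prob (mac_run P n gs (Suc s + k))
                   {\<sigma>. \<exists>i<n. (s, g) \<in> set (snd (\<sigma> i))})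
        \<le> L * measure_pmf.prob (gs ! g) {x. x \<noteq> None})"

end

theory Submission
  imports Defs
begin

datatype ls = Setup nat nat | Frame nat nat nat
instance ls :: countable by countable_datatype

definition coin :: "nat option pmf" where
  "coin = map_pmf (\<lambda>b. if b then Some 0 else None) (bernoulli_pmf (1/2))"

fun lact :: "ls \<Rightarrow> nat \<Rightarrow> nat option pmf" where
  "lact (Setup k me) q = (if me = 0 then coin else return_pmf None)"
| "lact (Frame i j r) q = return_pmf (if i = j then Some (if r = 0 then q else 0) else None)"

definition nxt :: "nat \<Rightarrow> nat \<Rightarrow> nat" where
  "nxt n j = (if Suc j = n then 0 else Suc j)"

fun lupd :: "nat \<Rightarrow> ls \<Rightarrow> nat option \<Rightarrow> nat option \<Rightarrow> ls" where
  "lupd n (Setup k me) a None = Setup k me"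
| "lupd n (Setup k me) a (Some m) =
     (let me' = (if me = 0 \<and> a \<noteq> None then Suc k else me) in
      if Suc k = n then Frame (me' - 1) 0 0 else Setup (Suc k) me')"
| "lupd n (Frame i j r) a None = Frame i j r"
| "lupd n (Frame i j r) a (Some m) =
     (if r = 0 then (if 2 \<le> m then Frame i j (m - 1) else Frame i (nxt n j) 0)
      else if r = 1 then Frame i (nxt n j) 0 else Frame i j (r - 1))"

definition prot :: "nat \<Rightarrow> mac_protocol" where
  "prot n = \<lparr>mp_init = to_nat (Setup 0 0),
             mp_act = (\<lambda>s q. lact (from_nat s) q),
             mp_upd = (\<lambda>s a fb k. to_nat (lupd n (from_nat s) a fb))\<rparr>"

definition lso :: "gstate \<Rightarrow> nat \<Rightarrow> ls" where
  "lso \<sigma> i = from_nat (fst (\<sigma> i))"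

definition nst :: "mac_protocol \<Rightarrow> nat \<Rightarrow> nat option pmf list \<Rightarrow> nat \<Rightarrow> gstate
     \<Rightarrow> (nat \<Rightarrow> nat option) \<Rightarrow> (nat \<Rightarrow> nat option) \<Rightarrow> gstate" where
  "nst P n gs t \<sigma> a r =
     (let T = {i. i < n \<and> a i \<noteq> None};
          fb = (if card T = 1 then a (the_elem T) else None)
      in (\<lambda>i. if i < n then
            (mp_upd P (fst (\<sigma> i)) (a i) fb (card {g. g < length gs \<and> r g = Some i}),
             (if T = {i} then tl (snd (\<sigma> i)) else snd (\<sigma> i))
               @ map (\<lambda>g. (t, g)) (filter (\<lambda>g. r g = Some i) [0..<length gs]))
          else \<sigma> i))"

lemma mac_step_alt:
  "mac_step P n gs t \<sigma> =
     Pi_pmf {..<n} None (\<lambda>i. mp_act P (fst (\<sigma> i)) (length (snd (\<sigma> i)))) \<bind> (\<lambda>a.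
     Pi_pmf {..<length gs} None (\<lambda>g. gs ! g) \<bind> (\<lambda>r. return_pmf (nst P n gs t \<sigma> a r)))"
  unfolding mac_step_def nst_def by (simp add: Let_def)

lemma nn_step:
  "(\<integral>\<^sup>+x. h x \<partial>mac_step P n gs t \<sigma>) =
   (\<integral>\<^sup>+a. \<integral>\<^sup>+r. h (nst P n gs t \<sigma> a r) \<partial>Pi_pmf {..<length gs} None (\<lambda>g. gs ! g)
      \<partial>Pi_pmf {..<n} None (\<lambda>i. mp_act P (fst (\<sigma> i)) (length (snd (\<sigma> i)))))"
  unfolding mac_step_alt by simp

lemma set_step:
  "set_pmf (mac_step P n gs t \<sigma>) =
   (\<Union>a\<in>set_pmf (Pi_pmf {..<n} None (\<lambda>i. mp_act P (fst (\<sigma> i)) (length (snd (\<sigma> i))))).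
    \<Union>r\<in>set_pmf (Pi_pmf {..<length gs} None (\<lambda>g. gs ! g)). {nst P n gs t \<sigma> a r})"
  unfolding mac_step_alt by simp

lemma in_set_Pi_pmf1:
  assumes "a \<in> set_pmf (Pi_pmf {..<(n::nat)} d p)" "i < n"
  shows "a i \<in> set_pmf (p i)"
proof -
  have "a \<in> PiE_dflt {..<n} d (set_pmf \<circ> p)" using assms(1) by (metis finite_lessThan set_Pi_pmf)
  then show ?thesis using assms(2) unfolding PiE_dflt_def by auto
qed

lemma in_set_Pi_pmf2:
  assumes "a \<in> set_pmf (Pi_pmf {..<(n::nat)} d p)" "\<not> i < n"
  shows "a i = d"
proof -
  have "a \<in> PiE_dflt {..<n} d (set_pmf \<circ> p)" using assms(1) by (metis finite_lessThan set_Pi_pmf)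
  then show ?thesis using assms(2) unfolding PiE_dflt_def by auto
qed

lemma set_coin: "set_pmf coin = {Some 0, None}"
  by (auto simp: coin_def set_pmf_bernoulli)

lemma pmf_coin: "pmf coin (Some 0) = 1/2" "pmf coin None = 1/2"
proof -
  have 1: "{x. x} = {True}" "{x. \<not> x} = {False}" by auto
  show "pmf coin (Some 0) = 1/2" "pmf coin None = 1/2"
    by (auto simp: coin_def pmf_map vimage_def 1 measure_pmf_single split: if_splits)
qed

definition fstep :: "nat \<Rightarrow> nat \<Rightarrow> nat \<Rightarrow> nat \<Rightarrow> nat \<times> nat" where
  "fstep n j r m = (if r = 0 then (if 2 \<le> m then (j, m - 1) else (nxt n j, 0))
                   else if r = 1 then (nxt n j, 0) else (j, r - 1))"

lemma lupd_Frame_Some: "lupd n (Frame x j r) a (Some m) = Frame x (fst (fstep n j r m)) (snd (fstep n j r m))"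
  by (simp add: fstep_def)

lemma lso_nst:
  "i < n \<Longrightarrow> lso (nst (prot n) n gs t \<sigma> a v) i =
     lupd n (lso \<sigma> i) (a i) (let T = {i. i < n \<and> a i \<noteq> None} in if card T = 1 then a (the_elem T) else None)"
  by (simp add: nst_def lso_def prot_def Let_def)

lemma snd_nst:
  "i < n \<Longrightarrow> snd (nst P n gs t \<sigma> a v i) =
     (if {i. i < n \<and> a i \<noteq> None} = {i} then tl (snd (\<sigma> i)) else snd (\<sigma> i))
       @ map (\<lambda>g. (t, g)) (filter (\<lambda>g. v g = Some i) [0..<length gs])"
  by (simp add: nst_def Let_def)

lemma frame_nst:
  assumes fr: "\<forall>i<n. lso \<sigma> i = Frame (ids i) j r"
    and bij: "bij_betw ids {..<n} {..<n}"
    and J: "J < n" "ids J = j"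
    and a: "a \<in> set_pmf (Pi_pmf {..<n} None (\<lambda>i. mp_act (prot n) (fst (\<sigma> i)) (length (snd (\<sigma> i)))))"
    and i: "i < n"
  shows "lso (nst (prot n) n gs t \<sigma> a v) i =
           Frame (ids i) (fst (fstep n j r (if r = 0 then length (snd (\<sigma> J)) else 0)))
                         (snd (fstep n j r (if r = 0 then length (snd (\<sigma> J)) else 0)))"
    "snd (nst (prot n) n gs t \<sigma> a v i) =
       (if i = J then tl (snd (\<sigma> i)) else snd (\<sigma> i))
         @ map (\<lambda>g. (t, g)) (filter (\<lambda>g. v g = Some i) [0..<length gs])"
proof -
  have uniq: "\<And>i. i < n \<Longrightarrow> ids i = j \<longleftrightarrow> i = J"
    using bij J unfolding bij_betw_def inj_on_def by auto
  have ai: "\<And>i. i < n \<Longrightarrow> a i = (if i = J then Some (if r = 0 then length (snd (\<sigma> J)) else 0) else None)"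
  proof -
    fix i assume "i < n"
    then have "a i \<in> set_pmf (mp_act (prot n) (fst (\<sigma> i)) (length (snd (\<sigma> i))))"
      using in_set_Pi_pmf1[OF a] by blast
    then show "a i = (if i = J then Some (if r = 0 then length (snd (\<sigma> J)) else 0) else None)"
      using fr \<open>i < n\<close> uniq[OF \<open>i < n\<close>] by (auto simp: prot_def lso_def)
  qed
  have T: "{i. i < n \<and> a i \<noteq> None} = {J}" using ai J by (auto split: if_splits)
  show "lso (nst (prot n) n gs t \<sigma> a v) i =
           Frame (ids i) (fst (fstep n j r (if r = 0 then length (snd (\<sigma> J)) else 0)))
                         (snd (fstep n j r (if r = 0 then length (snd (\<sigma> J)) else 0)))"
    using lso_nst[OF i, of gs t \<sigma> a v] T fr i ai[OF J(1)] by (simp add: fstep_def)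
  show "snd (nst (prot n) n gs t \<sigma> a v i) =
       (if i = J then tl (snd (\<sigma> i)) else snd (\<sigma> i))
         @ map (\<lambda>g. (t, g)) (filter (\<lambda>g. v g = Some i) [0..<length gs])"
    using snd_nst[OF i, of "prot n" gs t \<sigma> a v] T by auto
qed

lemma setup_act:
  assumes su: "\<forall>i<n. lso \<sigma> i = Setup k (me i)"
    and a: "a \<in> set_pmf (Pi_pmf {..<n} None (\<lambda>i. mp_act (prot n) (fst (\<sigma> i)) (length (snd (\<sigma> i)))))"
    and i: "i < n"
  shows "a i \<in> (if me i = 0 then {Some 0, None} else {None})"
proof -
  have "a i \<in> set_pmf (mp_act (prot n) (fst (\<sigma> i)) (length (snd (\<sigma> i))))"
    using in_set_Pi_pmf1[OF a i] .
  then show ?thesis using su i by (auto simp: prot_def lso_def set_coin)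
qed

lemma setup_nst_succ:
  assumes su: "\<forall>i<n. lso \<sigma> i = Setup k (me i)"
    and a: "a \<in> set_pmf (Pi_pmf {..<n} None (\<lambda>i. mp_act (prot n) (fst (\<sigma> i)) (length (snd (\<sigma> i)))))"
    and T: "{i. i < n \<and> a i \<noteq> None} = {i0}"
    and i: "i < n"
  shows "lso (nst (prot n) n gs t \<sigma> a v) i =
     (if Suc k = n then Frame ((if i = i0 then Suc k else me i) - 1) 0 0
      else Setup (Suc k) (if i = i0 then Suc k else me i))"
proof -
  have i0: "i0 < n" "a i0 \<noteq> None" using T by auto
  have a0: "a i0 = Some 0" using setup_act[OF su a i0(1)] i0(2) by (auto split: if_splits)
  have "me i0 = 0" using setup_act[OF su a i0(1)] i0(2) by (auto split: if_splits)
  moreover have "a i \<noteq> None \<longleftrightarrow> i = i0" using T i by auto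
  ultimately show ?thesis
    using lso_nst[OF i, of gs t \<sigma> a v] T su i a0 by (auto simp: Let_def)
qed

lemma setup_nst_fail:
  assumes su: "\<forall>i<n. lso \<sigma> i = Setup k (me i)"
    and T: "card {i. i < n \<and> a i \<noteq> None} \<noteq> 1"
    and i: "i < n"
  shows "lso (nst (prot n) n gs t \<sigma> a v) i = Setup k (me i)"
  using lso_nst[OF i, of gs t \<sigma> a v] T su i by (auto simp: Let_def)

definition SInv :: "nat \<Rightarrow> gstate \<Rightarrow> bool" where
  "SInv n \<sigma> = (\<exists>k me. k < n \<and> (\<forall>i<n. lso \<sigma> i = Setup k (me i)) \<and> (\<forall>i<n. me i \<le> k)
      \<and> inj_on me {i. i < n \<and> me i \<noteq> 0} \<and> card {i. i < n \<and> me i \<noteq> 0} = k)"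

definition FInv :: "nat \<Rightarrow> gstate \<Rightarrow> bool" where
  "FInv n \<sigma> = (\<exists>j r ids. j < n \<and> (\<forall>i<n. lso \<sigma> i = Frame (ids i) j r) \<and> bij_betw ids {..<n} {..<n}
      \<and> (\<forall>i<n. ids i = j \<longrightarrow> r \<le> length (snd (\<sigma> i))))"

definition Inv :: "nat \<Rightarrow> nat \<Rightarrow> gstate \<Rightarrow> bool" where
  "Inv n t \<sigma> = ((\<forall>i<n. \<forall>x\<in>set (snd (\<sigma> i)). fst x < t) \<and> (SInv n \<sigma> \<or> FInv n \<sigma>))"

lemma nxt_less: "j < n \<Longrightarrow> nxt n j < n"
  by (auto simp: nxt_def)

lemma bij_ex: "bij_betw ids {..<n} {..<n} \<Longrightarrow> j < n \<Longrightarrow> \<exists>J<n. ids J = j"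
  unfolding bij_betw_def by (metis imageE lessThan_iff)

lemma set_tl_sub: "x \<in> set (tl xs) \<Longrightarrow> x \<in> set xs"
  by (cases xs) auto

lemma time_inv:
  assumes "\<forall>i<n. \<forall>x\<in>set (snd (\<sigma> i)). fst x < t"
  shows "\<forall>i<n. \<forall>x\<in>set (snd (nst P n gs t \<sigma> a v i)). fst x < Suc t"
proof (intro allI impI ballI)
  fix i x assume i: "i < n" and x: "x \<in> set (snd (nst P n gs t \<sigma> a v i))"
  let ?T = "{i. i < n \<and> a i \<noteq> None} = {i}"
  have s1: "set (if ?T then tl (snd (\<sigma> i)) else snd (\<sigma> i)) \<subseteq> set (snd (\<sigma> i))"
    by (cases ?T) (auto dest: set_tl_sub)
  have s2: "set (map (\<lambda>g. (t, g)) (filter (\<lambda>g. v g = Some i) [0..<length gs])) \<subseteq> {x. fst x = t}"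
    by auto
  have "x \<in> set (snd (\<sigma> i)) \<or> fst x = t"
    using x s1 s2 unfolding snd_nst[OF i, of P gs t \<sigma> a v] set_append by blast
  then show "fst x < Suc t"
  proof
    assume "x \<in> set (snd (\<sigma> i))" then have "fst x < t" using assms i by blast
    then show ?thesis by simp
  qed simp
qed

lemma FInv_step:
  assumes fi: "FInv n \<sigma>"
    and a: "a \<in> set_pmf (Pi_pmf {..<n} None (\<lambda>i. mp_act (prot n) (fst (\<sigma> i)) (length (snd (\<sigma> i)))))"
  shows "FInv n (nst (prot n) n gs t \<sigma> a v)"
proof -
  obtain j r ids where j: "j < n" and fr: "\<forall>i<n. lso \<sigma> i = Frame (ids i) j r"
    and bij: "bij_betw ids {..<n} {..<n}" and len: "\<forall>i<n. ids i = j \<longrightarrow> r \<le> length (snd (\<sigma> i))"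
    using fi unfolding FInv_def by blast
  obtain J where J: "J < n" "ids J = j" using bij_ex[OF bij j] by blast
  have uniq: "\<And>i. i < n \<Longrightarrow> ids i = j \<longleftrightarrow> i = J"
    using bij J unfolding bij_betw_def inj_on_def by auto
  define m0 where "m0 = (if r = 0 then length (snd (\<sigma> J)) else 0)"
  define j' where "j' = fst (fstep n j r m0)"
  define r' where "r' = snd (fstep n j r m0)"
  note fn = frame_nst[OF fr bij J a, of _ gs t v]
  have j': "j' < n" using j nxt_less[OF j] by (auto simp: j'_def fstep_def)
  have "\<forall>i<n. ids i = j' \<longrightarrow> r' \<le> length (snd (nst (prot n) n gs t \<sigma> a v i))"
  proof (intro allI impI)
    fix i assume i: "i < n" and ij: "ids i = j'"
    show "r' \<le> length (snd (nst (prot n) n gs t \<sigma> a v i))"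
    proof (cases "r' = 0")
      case False
      then have "j' = j" and rr: "r' = (if r = 0 then length (snd (\<sigma> J)) - 1 else r - 1)"
        by (auto simp: r'_def j'_def fstep_def m0_def split: if_splits)
      then have "i = J" using uniq i ij by auto
      then show ?thesis using fn(2)[OF i] rr len J by auto
    qed simp
  qed
  moreover have "\<forall>i<n. lso (nst (prot n) n gs t \<sigma> a v) i = Frame (ids i) j' r'"
    using fn(1) by (simp add: j'_def r'_def m0_def)
  ultimately show ?thesis unfolding FInv_def using j' bij
    by (intro exI[of _ j'] exI[of _ r'] exI[of _ ids] conjI) simp_all
qed

lemma SInv_step:
  assumes si: "SInv n \<sigma>"
    and a: "a \<in> set_pmf (Pi_pmf {..<n} None (\<lambda>i. mp_act (prot n) (fst (\<sigma> i)) (length (snd (\<sigma> i)))))"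
  shows "SInv n (nst (prot n) n gs t \<sigma> a v) \<or> FInv n (nst (prot n) n gs t \<sigma> a v)"
proof -
  obtain k me where k: "k < n" and su: "\<forall>i<n. lso \<sigma> i = Setup k (me i)" and mek: "\<forall>i<n. me i \<le> k"
    and inj: "inj_on me {i. i < n \<and> me i \<noteq> 0}" and card: "card {i. i < n \<and> me i \<noteq> 0} = k"
    using si unfolding SInv_def by blast
  show ?thesis
  proof (cases "card {i. i < n \<and> a i \<noteq> None} = 1")
    case False
    have "\<forall>i<n. lso (nst (prot n) n gs t \<sigma> a v) i = Setup k (me i)"
      using setup_nst_fail[OF su False] by blast
    then have "SInv n (nst (prot n) n gs t \<sigma> a v)"
      unfolding SInv_def using k mek inj card by blast
    then show ?thesis ..
  next
    case True
    then obtain i0 where T: "{i. i < n \<and> a i \<noteq> None} = {i0}" by (meson card_1_singletonE)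
    have i0: "i0 < n" "a i0 \<noteq> None" using T by auto
    have me0: "me i0 = 0" using setup_act[OF su a i0(1)] i0(2) by (auto split: if_splits)
    define me' where "me' = (\<lambda>i. if i = i0 then Suc k else me i)"
    have S: "{i. i < n \<and> me' i \<noteq> 0} = insert i0 {i. i < n \<and> me i \<noteq> 0}"
      using i0 by (auto simp: me'_def)
    have card': "card {i. i < n \<and> me' i \<noteq> 0} = Suc k"
      unfolding S using card me0 by (subst card_insert_disjoint) auto
    have inj': "inj_on me' {i. i < n \<and> me' i \<noteq> 0}"
      unfolding S inj_on_def
    proof (intro ballI impI)
      fix x y assume x: "x \<in> insert i0 {i. i < n \<and> me i \<noteq> 0}" and y: "y \<in> insert i0 {i. i < n \<and> me i \<noteq> 0}"
        and e: "me' x = me' y"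
      have xn: "x < n" and yn: "y < n" using x y i0 by auto
      show "x = y"
      proof (cases "x = i0"; cases "y = i0")
        assume "x = i0" "y \<noteq> i0"
        then have "me' x = Suc k" "me' y = me y" by (simp_all add: me'_def)
        then show ?thesis using e mek yn by fastforce
      next
        assume "x \<noteq> i0" "y = i0"
        then have "me' y = Suc k" "me' x = me x" by (simp_all add: me'_def)
        then show ?thesis using e mek xn by fastforce
      next
        assume a1: "x \<noteq> i0" "y \<noteq> i0"
        then have "me x = me y" using e by (simp add: me'_def)
        moreover have "x \<in> {i. i < n \<and> me i \<noteq> 0}" "y \<in> {i. i < n \<and> me i \<noteq> 0}" using x y a1 by auto
        ultimately show ?thesis using inj unfolding inj_on_def by blast
      qed simp
    qed
    have mek': "\<forall>i<n. me' i \<le> Suc k" using mek by (auto simp: me'_def)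
    have ns: "\<And>i. i < n \<Longrightarrow> lso (nst (prot n) n gs t \<sigma> a v) i =
      (if Suc k = n then Frame (me' i - 1) 0 0 else Setup (Suc k) (me' i))"
      using setup_nst_succ[OF su a T] by (simp add: me'_def)
    show ?thesis
    proof (cases "Suc k = n")
      case False
      have l: "\<forall>i<n. lso (nst (prot n) n gs t \<sigma> a v) i = Setup (Suc k) (me' i)"
        using ns False by simp
      have "Suc k < n" using k False by simp
      then have "SInv n (nst (prot n) n gs t \<sigma> a v)"
        unfolding SInv_def using l card' inj' mek' by blast
      then show ?thesis ..
    next
      case True
      have sub0: "{i. i < n \<and> me' i \<noteq> 0} \<subseteq> {..<n}" by auto
      have c0: "card {i. i < n \<and> me' i \<noteq> 0} = card {..<n}" using card' True by simp
      have all: "{i. i < n \<and> me' i \<noteq> 0} = {..<n}"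
        by (rule card_subset_eq[OF finite_lessThan sub0 c0])
      define ids where "ids = (\<lambda>i. me' i - 1)"
      have injids: "inj_on ids {..<n}"
      proof (rule inj_onI)
        fix x y assume x: "x \<in> {..<n}" and y: "y \<in> {..<n}" and e: "ids x = ids y"
        have "me' x \<noteq> 0" "me' y \<noteq> 0" using x y all by blast+
        then have "me' x = me' y" using e by (simp add: ids_def)
        then show "x = y" using inj' x y all unfolding inj_on_def by blast
      qed
      have sub: "ids ` {..<n} \<subseteq> {..<n}"
      proof (rule image_subsetI)
        fix x assume x: "x \<in> {..<n}"
        have "me' x \<le> n" using mek' x True by simp
        moreover have "me' x \<noteq> 0" using x all by blast
        ultimately show "ids x \<in> {..<n}" by (simp add: ids_def)
      qed
      have bij: "bij_betw ids {..<n} {..<n}"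
        unfolding bij_betw_def using injids endo_inj_surj[OF finite_lessThan sub injids] by blast
      have "\<forall>i<n. lso (nst (prot n) n gs t \<sigma> a v) i = Frame (ids i) 0 0"
        using ns True by (simp add: ids_def)
      then have "FInv n (nst (prot n) n gs t \<sigma> a v)"
        unfolding FInv_def using bij True by blast
      then show ?thesis ..
    qed
  qed
qed

lemma Inv_step:
  assumes "Inv n t \<sigma>" "\<sigma>' \<in> set_pmf (mac_step (prot n) n gs t \<sigma>)"
  shows "Inv n (Suc t) \<sigma>'"
proof -
  obtain a v where a: "a \<in> set_pmf (Pi_pmf {..<n} None (\<lambda>i. mp_act (prot n) (fst (\<sigma> i)) (length (snd (\<sigma> i)))))"
    and s': "\<sigma>' = nst (prot n) n gs t \<sigma> a v"
    using assms(2) unfolding set_step by blast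
  have t1: "\<forall>i<n. \<forall>x\<in>set (snd (\<sigma>' i)). fst x < Suc t"
    unfolding s' by (rule time_inv) (use assms(1) in \<open>simp add: Inv_def\<close>)
  have "SInv n \<sigma> \<or> FInv n \<sigma>" using assms(1) by (simp add: Inv_def)
  then have "SInv n \<sigma>' \<or> FInv n \<sigma>'"
  proof
    assume "SInv n \<sigma>" then show ?thesis unfolding s' by (rule SInv_step[OF _ a])
  next
    assume "FInv n \<sigma>" then show ?thesis unfolding s' using FInv_step[OF _ a] by blast
  qed
  then show ?thesis using t1 by (simp add: Inv_def)
qed

lemma Inv_run:
  assumes "0 < n"
  shows "\<sigma> \<in> set_pmf (mac_run (prot n) n gs t) \<Longrightarrow> Inv n t \<sigma>"
proof (induction t arbitrary: \<sigma>)
  case 0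
  then have "\<sigma> = (\<lambda>i. (to_nat (Setup 0 0), []))" by (simp add: prot_def)
  then show ?case unfolding Inv_def SInv_def using assms
    by (intro conjI disjI1 exI[of _ 0] exI[of _ "\<lambda>_. 0"]) (auto simp: lso_def)
next
  case (Suc t)
  then obtain x where x: "x \<in> set_pmf (mac_run (prot n) n gs t)" "\<sigma> \<in> set_pmf (mac_step (prot n) n gs t x)"
    by auto
  show ?case by (rule Inv_step[OF Suc.IH[OF x(1)] x(2)])
qed


fun myid :: "ls \<Rightarrow> nat" where
  "myid (Frame x j r) = x" | "myid (Setup k m) = 0"

definition dn :: "nat \<Rightarrow> nat \<Rightarrow> nat \<Rightarrow> bool" where "dn j r x = (x < j \<or> (x = j \<and> 0 < r))"
definition th :: "nat \<Rightarrow> nat \<Rightarrow> nat \<Rightarrow> nat" where "th j r x = (if x = j then r else 0)"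

lemma drop_tl': "0 < r \<Longrightarrow> drop (r - 1) (tl q) = drop r q"
  by (cases r) (auto simp: drop_Suc)

lemma tl_short: "\<not> 2 \<le> length q \<Longrightarrow> tl q = []"
  by (cases q) (auto simp: Suc_le_eq)

lemma frame_station:
  assumes j: "j < n" and x: "x < n" and isJ: "x = j \<longleftrightarrow> isJ" and len: "isJ \<longrightarrow> r \<le> length q"
    and q': "q' = (if isJ then tl q else q) @ ys"
    and QJ: "isJ \<longrightarrow> Q = length q"
    and jr: "(j', r') = fstep n j r (if r = 0 then Q else 0)"
    and ne: "\<not> (Suc j = n \<and> (r = 1 \<or> (r = 0 \<and> Q \<le> 1)))"
  shows "(if dn j' r' x then length q' - th j' r' x else 0) \<le> (if dn j r x then length q - th j r x else 0) + length ys"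
proof -
  show ?thesis using assms
    by (auto simp: fstep_def nxt_def dn_def th_def tl_short split: if_splits)
qed

lemma frame_station_tag:
  assumes j: "j < n" and x: "x < n" and isJ: "x = j \<longleftrightarrow> isJ" and len: "isJ \<longrightarrow> r \<le> length q"
    and q': "q' = (if isJ then tl q else q) @ ys"
    and QJ: "isJ \<longrightarrow> Q = length q"
    and jr: "(j', r') = fstep n j r (if r = 0 then Q else 0)"
    and ne: "\<not> (Suc j = n \<and> (r = 1 \<or> (r = 0 \<and> Q \<le> 1)))"
    and tag: "tag \<notin> set ys" and d': "dn j' r' x" and tg: "tag \<in> set (drop (th j' r' x) q')"
  shows "dn j r x \<and> tag \<in> set (drop (th j r x) q)"
proof -
  have tg2: "tag \<in> set (drop (th j' r' x) (if isJ then tl q else q))"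
    using tg tag unfolding q' by (auto simp: drop_append dest: in_set_dropD)
  show ?thesis
  proof (cases isJ)
    case False
    then show ?thesis using assms tg2
      by (auto simp: fstep_def nxt_def dn_def th_def split: if_splits)
  next
    case True
    then have xj: "x = j" using isJ by simp
    show ?thesis
    proof (cases "r = 0")
      case True
      then show ?thesis using assms tg2 xj \<open>isJ\<close>
        by (auto simp: fstep_def nxt_def dn_def th_def split: if_splits)
    next
      case False
      then show ?thesis using assms tg2 xj \<open>isJ\<close> drop_tl'[of r q]
        by (auto simp: fstep_def nxt_def dn_def th_def drop_Suc split: if_splits)
    qed
  qed
qed

definition Wt :: "nat \<Rightarrow> gstate \<Rightarrow> nat" where "Wt n \<sigma> = (\<Sum>i<n. length (snd (\<sigma> i)))"
definition Wn :: "nat \<Rightarrow> nat \<Rightarrow> nat \<Rightarrow> gstate \<Rightarrow> nat" where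
  "Wn n j r \<sigma> = (\<Sum>i<n. if dn j r (myid (lso \<sigma> i)) then length (snd (\<sigma> i)) - th j r (myid (lso \<sigma> i)) else 0)"
definition rem :: "nat \<Rightarrow> nat \<Rightarrow> nat \<Rightarrow> nat" where "rem n j r = (if r = 0 then n - j else n - j - 1)"
definition ind :: "nat \<Rightarrow> nat \<Rightarrow> nat \<Rightarrow> pkt \<Rightarrow> gstate \<Rightarrow> bool" where
  "ind n j r tag \<sigma> = (\<exists>i<n. dn j r (myid (lso \<sigma> i)) \<and> tag \<in> set (drop (th j r (myid (lso \<sigma> i))) (snd (\<sigma> i))))"
definition pot :: "nat \<Rightarrow> real \<Rightarrow> gstate \<Rightarrow> real" where
  "pot n M \<sigma> = (case lso \<sigma> 0 of Setup k me \<Rightarrow> real (Wt n \<sigma>) + M * real (n - k) + real n + 1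
     | Frame x j r \<Rightarrow> real (rem n j r) + real (Wt n \<sigma>) + real (min n (Wn n j r \<sigma>)))"
definition tpot :: "nat \<Rightarrow> real \<Rightarrow> pkt \<Rightarrow> gstate \<Rightarrow> real" where
  "tpot n M tag \<sigma> = (case lso \<sigma> 0 of Setup k me \<Rightarrow> real (Wt n \<sigma>) + M * real (n - k) + real n + 1
     | Frame x j r \<Rightarrow> real (rem n j r) + real (Wt n \<sigma>) + (if ind n j r tag \<sigma> then real n else 0))"
definition Ai :: "nat option pmf list \<Rightarrow> (nat \<Rightarrow> nat option) \<Rightarrow> nat \<Rightarrow> nat" where
  "Ai gs v i = length (filter (\<lambda>g. v g = Some i) [0..<length gs])"
definition Aall :: "nat option pmf list \<Rightarrow> (nat \<Rightarrow> nat option) \<Rightarrow> nat" where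
  "Aall gs v = (\<Sum>g<length gs. if v g \<noteq> None then 1 else 0)"

lemma length_filter_upt: "length (filter P [0..<m]) = (\<Sum>g<m. if P g then 1 else 0)"
  by (induction m) auto

lemma sum_Ai: "(\<Sum>i<n. Ai gs v i) \<le> Aall gs v"
proof -
  have "(\<Sum>i<n. Ai gs v i) = (\<Sum>g<length gs. \<Sum>i<n. if v g = Some i then 1 else 0)"
    unfolding Ai_def length_filter_upt by (rule sum.swap)
  also have "\<dots> \<le> (\<Sum>g<length gs. if v g \<noteq> None then 1 else 0)"
  proof (rule sum_mono)
    fix g
    show "(\<Sum>i<n. if v g = Some i then 1 else 0) \<le> (if v g \<noteq> None then 1 else (0::nat))"
    proof (cases "v g")
      case (Some y)
      then show ?thesis by (simp add: sum.delta')
    qed simp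
  qed
  finally show ?thesis unfolding Aall_def .
qed

lemma Wt_nst:
  assumes "\<And>i. i < n \<Longrightarrow> snd (\<sigma>' i) = (if i = J then tl (snd (\<sigma> i)) else snd (\<sigma> i))
         @ map (\<lambda>g. (t, g)) (filter (\<lambda>g. v g = Some i) [0..<length gs])"
    and J: "J < n"
  shows "real (Wt n \<sigma>') = real (Wt n \<sigma>) - (if snd (\<sigma> J) \<noteq> [] then 1 else 0) + real (\<Sum>i<n. Ai gs v i)"
proof -
  have "\<And>i. i < n \<Longrightarrow> real (length (snd (\<sigma>' i))) =
      real (length (snd (\<sigma> i))) - (if i = J then (if snd (\<sigma> J) \<noteq> [] then 1 else 0) else 0) + real (Ai gs v i)"
    using assms by (auto simp: Ai_def of_nat_diff Suc_le_eq)
  then have "real (Wt n \<sigma>') = (\<Sum>i<n. real (length (snd (\<sigma> i))) - (if i = J then (if snd (\<sigma> J) \<noteq> [] then 1 else 0) else 0) + real (Ai gs v i))"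
    unfolding Wt_def of_nat_sum by (intro sum.cong) auto
  also have "\<dots> = real (Wt n \<sigma>) - (if snd (\<sigma> J) \<noteq> [] then 1 else 0) + real (\<Sum>i<n. Ai gs v i)"
    unfolding Wt_def of_nat_sum sum.distrib sum_subtractf using J by (simp add: sum.delta)
  finally show ?thesis .
qed

lemma frame_pot:
  assumes n0: "0 < n" and fi: "FInv n \<sigma>"
    and a: "a \<in> set_pmf (Pi_pmf {..<n} None (\<lambda>i. mp_act (prot n) (fst (\<sigma> i)) (length (snd (\<sigma> i)))))"
  shows "pot n M (nst (prot n) n gs t \<sigma> a v) \<le> max (pot n M \<sigma> - 1) (2 * real n) + 2 * real (Aall gs v)"
    and "(\<exists>i<n. tag \<in> set (snd (nst (prot n) n gs t \<sigma> a v i))) \<Longrightarrow> fst tag \<noteq> t \<Longrightarrow>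
         tpot n M tag (nst (prot n) n gs t \<sigma> a v) \<le> tpot n M tag \<sigma> - 1 + real (Aall gs v)"
proof -
  define \<sigma>' where "\<sigma>' = nst (prot n) n gs t \<sigma> a v"
  obtain j r ids where j: "j < n" and fr: "\<forall>i<n. lso \<sigma> i = Frame (ids i) j r"
    and bij: "bij_betw ids {..<n} {..<n}" and len: "\<forall>i<n. ids i = j \<longrightarrow> r \<le> length (snd (\<sigma> i))"
    using fi unfolding FInv_def by blast
  obtain J where J: "J < n" "ids J = j" using bij_ex[OF bij j] by blast
  have uniq: "\<And>i. i < n \<Longrightarrow> ids i = j \<longleftrightarrow> i = J"
    using bij J unfolding bij_betw_def inj_on_def by auto
  have idsn: "\<And>i. i < n \<Longrightarrow> ids i < n" using bij unfolding bij_betw_def by auto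
  define Q where "Q = length (snd (\<sigma> J))"
  define m0 where "m0 = (if r = 0 then Q else 0)"
  define j' where "j' = fst (fstep n j r m0)"
  define r' where "r' = snd (fstep n j r m0)"
  have jr: "(j', r') = fstep n j r m0" by (simp add: j'_def r'_def)
  have fn1: "\<And>i. i < n \<Longrightarrow> lso \<sigma>' i = Frame (ids i) j' r'"
    using frame_nst(1)[OF fr bij J a] by (simp add: \<sigma>'_def j'_def r'_def m0_def Q_def)
  have fn2: "\<And>i. i < n \<Longrightarrow> snd (\<sigma>' i) = (if i = J then tl (snd (\<sigma> i)) else snd (\<sigma> i))
         @ map (\<lambda>g. (t, g)) (filter (\<lambda>g. v g = Some i) [0..<length gs])"
    using frame_nst(2)[OF fr bij J a] by (simp add: \<sigma>'_def)
  define A where "A = (\<Sum>i<n. Ai gs v i)"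
  have AA: "real A \<le> real (Aall gs v)" unfolding A_def using sum_Ai[where n=n and gs=gs and v=v] of_nat_mono by blast
  have A0: "0 \<le> real A" by simp
  have W: "real (Wt n \<sigma>') = real (Wt n \<sigma>) - (if snd (\<sigma> J) \<noteq> [] then 1 else 0) + real A"
    using Wt_nst[OF fn2 J(1)] by (simp add: A_def)
  have QJ: "0 < r \<Longrightarrow> r \<le> Q" using len J by (simp add: Q_def)
  have Qne: "(snd (\<sigma> J) \<noteq> []) = (0 < Q)" by (simp add: Q_def)
  have pot0: "pot n M \<sigma> = real (rem n j r) + real (Wt n \<sigma>) + real (min n (Wn n j r \<sigma>))"
    using fr n0 by (simp add: pot_def)
  have pot0': "pot n M \<sigma>' = real (rem n j' r') + real (Wt n \<sigma>') + real (min n (Wn n j' r' \<sigma>'))"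
    using fn1 n0 by (simp add: pot_def)
  have tpot0: "tpot n M tag \<sigma> = real (rem n j r) + real (Wt n \<sigma>) + (if ind n j r tag \<sigma> then real n else 0)"
    using fr n0 by (simp add: tpot_def)
  have tpot0': "tpot n M tag \<sigma>' = real (rem n j' r') + real (Wt n \<sigma>') + (if ind n j' r' tag \<sigma>' then real n else 0)"
    using fn1 n0 by (simp add: tpot_def)
  have Wn0: "Wn n j r \<sigma> = (\<Sum>i<n. if dn j r (ids i) then length (snd (\<sigma> i)) - th j r (ids i) else 0)"
    unfolding Wn_def by (intro sum.cong) (simp_all add: fr)
  have Wn0': "Wn n j' r' \<sigma>' = (\<Sum>i<n. if dn j' r' (ids i) then length (snd (\<sigma>' i)) - th j' r' (ids i) else 0)"
    unfolding Wn_def by (intro sum.cong) (simp_all add: fn1)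
  have ind0: "ind n j r tag \<sigma> = (\<exists>i<n. dn j r (ids i) \<and> tag \<in> set (drop (th j r (ids i)) (snd (\<sigma> i))))"
    unfolding ind_def using fr by auto
  have ind0': "ind n j' r' tag \<sigma>' = (\<exists>i<n. dn j' r' (ids i) \<and> tag \<in> set (drop (th j' r' (ids i)) (snd (\<sigma>' i))))"
    unfolding ind_def using fn1 by auto
  define endc where "endc = (Suc j = n \<and> (r = 1 \<or> (r = 0 \<and> Q \<le> 1)))"
  have goal: "pot n M \<sigma>' \<le> max (pot n M \<sigma> - 1) (2 * real n) + 2 * real (Aall gs v) \<and>
     ((\<exists>i<n. tag \<in> set (snd (\<sigma>' i))) \<longrightarrow> fst tag \<noteq> t \<longrightarrow> tpot n M tag \<sigma>' \<le> tpot n M tag \<sigma> - 1 + real (Aall gs v))"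
  proof (cases endc)
    case False
    have st: "\<And>i. i < n \<Longrightarrow> (if dn j' r' (ids i) then length (snd (\<sigma>' i)) - th j' r' (ids i) else 0)
        \<le> (if dn j r (ids i) then length (snd (\<sigma> i)) - th j r (ids i) else 0) + Ai gs v i"
    proof -
      fix i assume i: "i < n"
      show "?thesis i"
        using frame_station[OF j idsn[OF i] uniq[OF i] _ fn2[OF i] _ _ False[unfolded endc_def]]
          len J i jr uniq[OF i] by (simp add: Ai_def Q_def m0_def)
    qed
    have Wn': "Wn n j' r' \<sigma>' \<le> Wn n j r \<sigma> + A"
      unfolding Wn0 Wn0' A_def sum.distrib[symmetric] by (rule sum_mono) (use st in auto)
    have remb: "real (rem n j' r') - (if snd (\<sigma> J) \<noteq> [] then 1 else 0) \<le> real (rem n j r) - 1"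
      using False QJ j jr unfolding endc_def Qne
      by (auto simp: rem_def fstep_def nxt_def m0_def of_nat_diff split: if_splits)
    have p1: "pot n M \<sigma>' \<le> pot n M \<sigma> - 1 + 2 * real A"
    proof -
      have "min n (Wn n j' r' \<sigma>') \<le> min n (Wn n j r \<sigma>) + A" using Wn' by linarith
      then have "real (min n (Wn n j' r' \<sigma>')) \<le> real (min n (Wn n j r \<sigma>)) + real A"
        by (metis of_nat_add of_nat_le_iff)
      then show ?thesis unfolding pot0 pot0' W using remb by linarith
    qed
    have t1: "(\<exists>i<n. tag \<in> set (snd (\<sigma>' i))) \<longrightarrow> fst tag \<noteq> t \<longrightarrow> tpot n M tag \<sigma>' \<le> tpot n M tag \<sigma> - 1 + real (Aall gs v)"
    proof (intro impI)
      assume ft: "fst tag \<noteq> t"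
      have "ind n j' r' tag \<sigma>' \<Longrightarrow> ind n j r tag \<sigma>"
      proof -
        assume "ind n j' r' tag \<sigma>'"
        then obtain i where i: "i < n" "dn j' r' (ids i)" "tag \<in> set (drop (th j' r' (ids i)) (snd (\<sigma>' i)))"
          unfolding ind0' by blast
        have "tag \<notin> set (map (\<lambda>g. (t, g)) (filter (\<lambda>g. v g = Some i) [0..<length gs]))" using ft by auto
        then have "dn j r (ids i) \<and> tag \<in> set (drop (th j r (ids i)) (snd (\<sigma> i)))"
          using frame_station_tag[OF j idsn[OF i(1)] uniq[OF i(1)] _ fn2[OF i(1)] _ _ False[unfolded endc_def]]
            len J i jr uniq[OF i(1)] by (simp add: Q_def m0_def)
        then show ?thesis unfolding ind0 using i by blast
      qed
      then show "tpot n M tag \<sigma>' \<le> tpot n M tag \<sigma> - 1 + real (Aall gs v)"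
        unfolding tpot0 tpot0' W using remb AA by auto
    qed
    show ?thesis using p1 t1 AA by auto
  next
    case True
    have j'0: "j' = 0" "r' = 0" using True jr unfolding endc_def
      by (auto simp: fstep_def nxt_def m0_def split: if_splits)
    have Wn'0: "Wn n j' r' \<sigma>' = 0" using Wn0' j'0 by (simp add: dn_def)
    have ind'0: "\<not> ind n j' r' tag \<sigma>'" using ind0' j'0 by (simp add: dn_def)
    have rem'0: "rem n j' r' = n" using j'0 by (simp add: rem_def)
    have remj: "rem n j r = (if r = 0 then 1 else 0)" using True unfolding endc_def by (auto simp: rem_def)
    have stW: "\<And>i. i < n \<Longrightarrow> length (snd (\<sigma> i)) \<le> (if dn j r (ids i) then length (snd (\<sigma> i)) - th j r (ids i) else 0)
        + (if i = J then (if r = 0 then Q else 1) else 0)"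
    proof -
      fix i assume i: "i < n"
      show "?thesis i"
      proof (cases "i = J")
        case True then show ?thesis using \<open>endc\<close> J by (auto simp: endc_def dn_def th_def Q_def)
      next
        case False
        then have "ids i < j" using uniq[OF i] idsn[OF i] \<open>endc\<close> unfolding endc_def by auto
        then show ?thesis using False by (simp add: dn_def th_def)
      qed
    qed
    have Wb: "Wt n \<sigma> \<le> Wn n j r \<sigma> + (if r = 0 then Q else 1)"
    proof -
      have "Wt n \<sigma> \<le> (\<Sum>i<n. (if dn j r (ids i) then length (snd (\<sigma> i)) - th j r (ids i) else 0)
        + (if i = J then (if r = 0 then Q else 1) else 0))"
        unfolding Wt_def by (rule sum_mono) (use stW in auto)
      also have "\<dots> = Wn n j r \<sigma> + (if r = 0 then Q else 1)"
        unfolding Wn0 sum.distrib using J by (simp add: sum.delta)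
      finally show ?thesis .
    qed
    have rQ: "r = 0 \<and> Q \<le> 1 \<or> r = 1 \<and> 1 \<le> Q" using True QJ unfolding endc_def by auto
    have p1: "pot n M \<sigma>' \<le> max (pot n M \<sigma> - 1) (2 * real n) + real A"
    proof (cases "n \<le> Wn n j r \<sigma>")
      case True
      then show ?thesis unfolding pot0 pot0' W Wn'0 rem'0 remj using rQ Qne by auto
    next
      case False
      then have "real (Wt n \<sigma>) \<le> real n" using Wb rQ by auto
      then show ?thesis unfolding pot0' W Wn'0 rem'0 by auto
    qed
    have t1: "(\<exists>i<n. tag \<in> set (snd (\<sigma>' i))) \<longrightarrow> fst tag \<noteq> t \<longrightarrow> tpot n M tag \<sigma>' \<le> tpot n M tag \<sigma> - 1 + real (Aall gs v)"
    proof (intro impI)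
      assume ex: "\<exists>i<n. tag \<in> set (snd (\<sigma>' i))" and ft: "fst tag \<noteq> t"
      then obtain i where i: "i < n" "tag \<in> set (snd (\<sigma>' i))" by blast
      then have tb: "tag \<in> set (if i = J then tl (snd (\<sigma> i)) else snd (\<sigma> i))" using fn2[OF i(1)] ft by auto
      have "ind n j r tag \<sigma>"
      proof (cases "i = J")
        case False
        then have "ids i < j" using uniq[OF i(1)] idsn[OF i(1)] \<open>endc\<close> unfolding endc_def by auto
        then show ?thesis unfolding ind0 using i tb False by (auto simp: dn_def th_def)
      next
        case True
        then have "r = 1" using tb rQ tl_short[of "snd (\<sigma> J)"] by (auto simp: Q_def)
        then show ?thesis unfolding ind0 using i tb True J by (auto simp: dn_def th_def drop_Suc)
      qed
      then show "tpot n M tag \<sigma>' \<le> tpot n M tag \<sigma> - 1 + real (Aall gs v)"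
        unfolding tpot0 tpot0' W rem'0 remj using ind'0 rQ Qne AA by auto
    qed
    show ?thesis using p1 t1 AA by auto
  qed
  show "pot n M (nst (prot n) n gs t \<sigma> a v) \<le> max (pot n M \<sigma> - 1) (2 * real n) + 2 * real (Aall gs v)"
    using goal by (simp add: \<sigma>'_def)
  show "(\<exists>i<n. tag \<in> set (snd (nst (prot n) n gs t \<sigma> a v i))) \<Longrightarrow> fst tag \<noteq> t \<Longrightarrow>
         tpot n M tag (nst (prot n) n gs t \<sigma> a v) \<le> tpot n M tag \<sigma> - 1 + real (Aall gs v)"
    using goal by (simp add: \<sigma>'_def)
qed


lemma double_bound:
  fixes h :: "'a \<Rightarrow> 'b \<Rightarrow> ennreal"
  assumes "\<And>a r. a \<in> set_pmf PA \<Longrightarrow> r \<in> set_pmf PR \<Longrightarrow> h a r \<le> f a * g r"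
  shows "(\<integral>\<^sup>+a. \<integral>\<^sup>+r. h a r \<partial>PR \<partial>PA) \<le> (\<integral>\<^sup>+a. f a \<partial>PA) * (\<integral>\<^sup>+r. g r \<partial>PR)"
proof -
  have "(\<integral>\<^sup>+a. \<integral>\<^sup>+r. h a r \<partial>PR \<partial>PA) \<le> (\<integral>\<^sup>+a. \<integral>\<^sup>+r. f a * g r \<partial>PR \<partial>PA)"
  proof (rule nn_integral_mono_AE)
    show "AE a in measure_pmf PA. (\<integral>\<^sup>+r. h a r \<partial>PR) \<le> (\<integral>\<^sup>+r. f a * g r \<partial>PR)"
      unfolding AE_measure_pmf_iff
    proof (intro ballI nn_integral_mono_AE)
      fix a assume a: "a \<in> set_pmf PA"
      show "AE r in measure_pmf PR. h a r \<le> f a * g r"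
        unfolding AE_measure_pmf_iff using assms[OF a] by blast
    qed
  qed
  also have "\<dots> = (\<integral>\<^sup>+a. f a * (\<integral>\<^sup>+r. g r \<partial>PR) \<partial>PA)"
    by (simp add: nn_integral_cmult)
  also have "\<dots> = (\<integral>\<^sup>+a. f a \<partial>PA) * (\<integral>\<^sup>+r. g r \<partial>PR)"
    by (simp add: nn_integral_multc)
  finally show ?thesis .
qed

lemma nn_two_valued:
  fixes p :: "'a pmf" and c d :: real
  assumes "0 \<le> c" "0 \<le> d"
  shows "(\<integral>\<^sup>+x. ennreal (if x \<in> S then c else d) \<partial>p) =
         ennreal (c * measure_pmf.prob p S + d * (1 - measure_pmf.prob p S))"
proof -
  have e: "\<And>x. ennreal (if x \<in> S then c else d) = ennreal c * indicator S x + ennreal d * indicator (- S) x"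
    by (auto simp: indicator_def)
  have "(\<integral>\<^sup>+x. ennreal (if x \<in> S then c else d) \<partial>p) = ennreal c * emeasure p S + ennreal d * emeasure p (- S)"
    unfolding e by (simp add: nn_integral_add nn_integral_cmult_indicator)
  also have "emeasure p (- S) = ennreal (1 - measure_pmf.prob p S)"
  proof -
    have "measure_pmf.prob p (- S) = 1 - measure_pmf.prob p S"
      using measure_pmf.prob_compl[of S p] by (simp add: Compl_eq_Diff_UNIV)
    then show ?thesis by (simp add: measure_pmf.emeasure_eq_measure)
  qed
  also have "emeasure p S = ennreal (measure_pmf.prob p S)"
    by (simp add: measure_pmf.emeasure_eq_measure)
  finally have eq: "(\<integral>\<^sup>+x. ennreal (if x \<in> S then c else d) \<partial>p) = ennreal c * ennreal (measure_pmf.prob p S) + ennreal d * ennreal (1 - measure_pmf.prob p S)" .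
  have p1: "0 \<le> 1 - measure_pmf.prob p S" by (simp add: measure_pmf.prob_le_1)
  have "ennreal c * ennreal (measure_pmf.prob p S) + ennreal d * ennreal (1 - measure_pmf.prob p S)
      = ennreal (c * measure_pmf.prob p S) + ennreal (d * (1 - measure_pmf.prob p S))"
    using assms p1 by (simp add: ennreal_mult)
  also have "\<dots> = ennreal (c * measure_pmf.prob p S + d * (1 - measure_pmf.prob p S))"
    using assms p1 by (intro ennreal_plus[symmetric]) simp_all
  finally show ?thesis using eq by simp
qed

lemma exp_cnt:
  fixes m :: nat and c :: real
  shows "ennreal (exp (c * real (\<Sum>g<m. if v g \<noteq> None then 1 else 0::nat))) =
   (\<Prod>g<m. ennreal (if v g \<in> {x. x \<noteq> None} then exp c else 1))"
proof -
  have e1: "c * real (\<Sum>g<m. if v g \<noteq> None then 1 else 0::nat) = (\<Sum>g<m. if v g \<noteq> None then c else 0)"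
    unfolding of_nat_sum sum_distrib_left by (intro sum.cong) auto
  have "exp (c * real (\<Sum>g<m. if v g \<noteq> None then 1 else 0::nat)) = (\<Prod>g<m. exp (if v g \<noteq> None then c else 0))"
    unfolding e1 by (rule exp_sum) simp
  also have "\<dots> = (\<Prod>g<m. (if v g \<in> {x. x \<noteq> None} then exp c else 1))"
    by (intro prod.cong) auto
  finally show ?thesis by (simp add: prod_ennreal)
qed

lemma arr_exp:
  fixes gs :: "'a option pmf list"
  assumes c: "0 \<le> c"
  shows "(\<integral>\<^sup>+v. ennreal (exp (c * real (\<Sum>g<length gs. if v g \<noteq> None then 1 else 0::nat)))
            \<partial>Pi_pmf {..<length gs} None (\<lambda>g. gs ! g))
         \<le> ennreal (exp ((\<Sum>g<length gs. measure_pmf.prob (gs ! g) {x. x \<noteq> None}) * (exp c - 1)))"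
proof -
  let ?p = "\<lambda>g. measure_pmf.prob (gs ! g) {x. x \<noteq> None}"
  have "(\<integral>\<^sup>+v. ennreal (exp (c * real (\<Sum>g<length gs. if v g \<noteq> None then 1 else 0::nat)))
            \<partial>Pi_pmf {..<length gs} None (\<lambda>g. gs ! g))
     = (\<Prod>g<length gs. \<integral>\<^sup>+x. ennreal (if x \<in> {x. x \<noteq> None} then exp c else 1) \<partial>(gs ! g))"
    unfolding exp_cnt by (rule nn_integral_prod_Pi_pmf) simp
  also have "\<dots> = (\<Prod>g<length gs. ennreal (exp c * ?p g + 1 * (1 - ?p g)))"
    by (intro prod.cong refl nn_two_valued) simp_all
  also have "\<dots> = ennreal (\<Prod>g<length gs. exp c * ?p g + 1 * (1 - ?p g))"
    by (rule prod_ennreal) (simp add: measure_pmf.prob_le_1 add_nonneg_nonneg)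
  also have "\<dots> \<le> ennreal (\<Prod>g<length gs. exp (?p g * (exp c - 1)))"
  proof (intro ennreal_leI prod_mono conjI)
    fix g
    show "0 \<le> exp c * ?p g + 1 * (1 - ?p g)" by (simp add: measure_pmf.prob_le_1 add_nonneg_nonneg)
    have "exp c * ?p g + 1 * (1 - ?p g) = 1 + ?p g * (exp c - 1)" by (simp add: algebra_simps)
    also have "\<dots> \<le> exp (?p g * (exp c - 1))" by (rule exp_ge_add_one_self)
    finally show "exp c * ?p g + 1 * (1 - ?p g) \<le> exp (?p g * (exp c - 1))" .
  qed
  also have "(\<Prod>g<length gs. exp (?p g * (exp c - 1))) = exp ((\<Sum>g<length gs. ?p g) * (exp c - 1))"
    by (simp add: exp_sum sum_distrib_right)
  finally show ?thesis .
qed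

lemma arr_tag:
  fixes gs :: "'a option pmf list"
  assumes c: "0 \<le> c" and g0: "g0 < length gs"
  shows "(\<integral>\<^sup>+v. indicator {v. v g0 \<noteq> None} v * ennreal (exp (c * real (\<Sum>g<length gs. if v g \<noteq> None then 1 else 0::nat)))
            \<partial>Pi_pmf {..<length gs} None (\<lambda>g. gs ! g))
         \<le> ennreal (measure_pmf.prob (gs ! g0) {x. x \<noteq> None} * exp c *
                  exp ((\<Sum>g<length gs. measure_pmf.prob (gs ! g) {x. x \<noteq> None}) * (exp c - 1)))"
proof -
  let ?p = "\<lambda>g. measure_pmf.prob (gs ! g) {x. x \<noteq> None}"
  define h where "h = (\<lambda>g (x::'a option). if g = g0 then (if x \<in> {x. x \<noteq> None} then exp c else 0)
                          else (if x \<in> {x. x \<noteq> None} then exp c else 1))"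
  have ie: "\<And>v. indicator {v. v g0 \<noteq> None} v * ennreal (exp (c * real (\<Sum>g<length gs. if v g \<noteq> None then 1 else 0::nat)))
      = (\<Prod>g<length gs. ennreal (h g (v g)))"
  proof -
    fix v :: "nat \<Rightarrow> 'a option"
    have "(\<Prod>g<length gs. ennreal (h g (v g))) = ennreal (h g0 (v g0)) * (\<Prod>g\<in>{..<length gs} - {g0}. ennreal (h g (v g)))"
      using g0 by (subst prod.remove[of _ g0]) auto
    also have "(\<Prod>g\<in>{..<length gs} - {g0}. ennreal (h g (v g))) = (\<Prod>g\<in>{..<length gs} - {g0}. ennreal (if v g \<in> {x. x \<noteq> None} then exp c else 1))"
      by (intro prod.cong) (auto simp: h_def)
    finally have 1: "(\<Prod>g<length gs. ennreal (h g (v g))) = ennreal (h g0 (v g0)) * (\<Prod>g\<in>{..<length gs} - {g0}. ennreal (if v g \<in> {x. x \<noteq> None} then exp c else 1))" .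
    have 2: "(\<Prod>g<length gs. ennreal (if v g \<in> {x. x \<noteq> None} then exp c else 1)) = ennreal (if v g0 \<in> {x. x \<noteq> None} then exp c else 1) * (\<Prod>g\<in>{..<length gs} - {g0}. ennreal (if v g \<in> {x. x \<noteq> None} then exp c else 1))"
      using g0 by (subst prod.remove[of _ g0]) auto
    show "?thesis v" unfolding exp_cnt 1 2 by (auto simp: h_def indicator_def)
  qed
  have "(\<integral>\<^sup>+v. indicator {v. v g0 \<noteq> None} v * ennreal (exp (c * real (\<Sum>g<length gs. if v g \<noteq> None then 1 else 0::nat)))
            \<partial>Pi_pmf {..<length gs} None (\<lambda>g. gs ! g))
     = (\<Prod>g<length gs. \<integral>\<^sup>+x. ennreal (h g x) \<partial>(gs ! g))"
    unfolding ie by (rule nn_integral_prod_Pi_pmf) simp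
  also have "\<dots> = (\<Prod>g<length gs. ennreal (if g = g0 then exp c * ?p g + 0 * (1 - ?p g) else exp c * ?p g + 1 * (1 - ?p g)))"
  proof (intro prod.cong refl)
    fix g assume "g \<in> {..<length gs}"
    show "(\<integral>\<^sup>+x. ennreal (h g x) \<partial>(gs ! g)) = ennreal (if g = g0 then exp c * ?p g + 0 * (1 - ?p g) else exp c * ?p g + 1 * (1 - ?p g))"
    proof (cases "g = g0")
      case True then show ?thesis using nn_two_valued[of "exp c" 0 "gs ! g" "{x. x \<noteq> None}"] by (simp add: h_def)
    next
      case False then show ?thesis using nn_two_valued[of "exp c" 1 "gs ! g" "{x. x \<noteq> None}"] by (simp add: h_def)
    qed
  qed
  also have "\<dots> = ennreal (\<Prod>g<length gs. (if g = g0 then exp c * ?p g + 0 * (1 - ?p g) else exp c * ?p g + 1 * (1 - ?p g)))"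
    by (rule prod_ennreal) (simp add: measure_pmf.prob_le_1 add_nonneg_nonneg)
  also have "\<dots> \<le> ennreal (\<Prod>g<length gs. (if g = g0 then ?p g0 * exp c else 1) * exp (?p g * (exp c - 1)))"
  proof (intro ennreal_leI prod_mono conjI)
    fix g
    show "0 \<le> (if g = g0 then exp c * ?p g + 0 * (1 - ?p g) else exp c * ?p g + 1 * (1 - ?p g))"
      by (simp add: measure_pmf.prob_le_1 add_nonneg_nonneg)
    show "(if g = g0 then exp c * ?p g + 0 * (1 - ?p g) else exp c * ?p g + 1 * (1 - ?p g))
       \<le> (if g = g0 then ?p g0 * exp c else 1) * exp (?p g * (exp c - 1))"
    proof (cases "g = g0")
      case True
      have "0 \<le> ?p g * (exp c - 1)" using c by simp
      then have "1 \<le> exp (?p g * (exp c - 1))" by simp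
      then have "?p g0 * exp c * 1 \<le> ?p g0 * exp c * exp (?p g * (exp c - 1))"
        by (intro mult_left_mono) simp_all
      then show ?thesis using True by (simp add: mult.commute)
    next
      case False
      have "exp c * ?p g + 1 * (1 - ?p g) = 1 + ?p g * (exp c - 1)" by (simp add: algebra_simps)
      also have "\<dots> \<le> exp (?p g * (exp c - 1))" by (rule exp_ge_add_one_self)
      finally show ?thesis using False by simp
    qed
  qed
  also have "(\<Prod>g<length gs. (if g = g0 then ?p g0 * exp c else 1) * exp (?p g * (exp c - 1)))
     = ?p g0 * exp c * exp ((\<Sum>g<length gs. ?p g) * (exp c - 1))"
    using g0 by (simp add: prod.distrib exp_sum sum_distrib_right prod.delta)
  finally show ?thesis .
qed


abbreviation acts :: "nat \<Rightarrow> gstate \<Rightarrow> (nat \<Rightarrow> nat option) pmf" where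
  "acts n \<sigma> \<equiv> Pi_pmf {..<n} None (\<lambda>i. mp_act (prot n) (fst (\<sigma> i)) (length (snd (\<sigma> i))))"
abbreviation gens :: "nat option pmf list \<Rightarrow> (nat \<Rightarrow> nat option) pmf" where
  "gens gs \<equiv> Pi_pmf {..<length gs} None (\<lambda>g. gs ! g)"

lemma Wt_le: "real (Wt n (nst P n gs t \<sigma> a v)) \<le> real (Wt n \<sigma>) + real (Aall gs v)"
proof -
  have "Wt n (nst P n gs t \<sigma> a v) \<le> (\<Sum>i<n. length (snd (\<sigma> i)) + Ai gs v i)"
    unfolding Wt_def
  proof (rule sum_mono)
    fix i assume "i \<in> {..<n}"
    then show "length (snd (nst P n gs t \<sigma> a v i)) \<le> length (snd (\<sigma> i)) + Ai gs v i"
      using snd_nst[of i n P gs t \<sigma> a v] by (auto simp: Ai_def)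
  qed
  also have "\<dots> \<le> Wt n \<sigma> + Aall gs v" unfolding sum.distrib Wt_def using sum_Ai[where n=n and gs=gs and v=v] by simp
  finally show ?thesis by (metis of_nat_add of_nat_le_iff)
qed

lemma tpot_le: "0 \<le> M \<Longrightarrow> tpot n M tag \<sigma> \<le> pot n M \<sigma> + real n"
  by (cases "lso \<sigma> 0") (auto simp: tpot_def pot_def)

lemma pot_nonneg: "0 \<le> M \<Longrightarrow> 0 \<le> pot n M \<sigma>"
  by (cases "lso \<sigma> 0") (auto simp: pot_def)

lemma Wt_le_pot: "0 \<le> M \<Longrightarrow> real (Wt n \<sigma>) \<le> pot n M \<sigma>"
  by (cases "lso \<sigma> 0") (auto simp: pot_def)

lemma tpot_nonneg: "0 \<le> M \<Longrightarrow> 0 \<le> tpot n M tag \<sigma>"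
  by (cases "lso \<sigma> 0") (auto simp: tpot_def)

lemma setup_pot:
  assumes n0: "0 < n" and si: "SInv n \<sigma>" and a: "a \<in> set_pmf (acts n \<sigma>)"
  shows "pot n M (nst (prot n) n gs t \<sigma> a v) \<le> pot n M \<sigma> + real (Aall gs v)
            - M * (if card {i. i < n \<and> a i \<noteq> None} = 1 then 1 else 0)"
    and "tpot n M tag (nst (prot n) n gs t \<sigma> a v) = pot n M (nst (prot n) n gs t \<sigma> a v)"
    and "tpot n M tag \<sigma> = pot n M \<sigma>"
proof -
  define \<sigma>' where "\<sigma>' = nst (prot n) n gs t \<sigma> a v"
  obtain k me where k: "k < n" and su: "\<forall>i<n. lso \<sigma> i = Setup k (me i)"
    using si unfolding SInv_def by blast
  have W: "real (Wt n \<sigma>') \<le> real (Wt n \<sigma>) + real (Aall gs v)" unfolding \<sigma>'_def by (rule Wt_le)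
  have p0: "pot n M \<sigma> = real (Wt n \<sigma>) + M * real (n - k) + real n + 1" using su n0 by (simp add: pot_def)
  show "tpot n M tag \<sigma> = pot n M \<sigma>" using su n0 by (simp add: pot_def tpot_def)
  have "pot n M \<sigma>' \<le> pot n M \<sigma> + real (Aall gs v) - M * (if card {i. i < n \<and> a i \<noteq> None} = 1 then 1 else 0)
        \<and> tpot n M tag \<sigma>' = pot n M \<sigma>'"
  proof (cases "card {i. i < n \<and> a i \<noteq> None} = 1")
    case False
    have "lso \<sigma>' 0 = Setup k (me 0)" using setup_nst_fail[OF su False n0] by (simp add: \<sigma>'_def)
    then show ?thesis using p0 W False by (simp add: pot_def tpot_def)
  next
    case True
    then obtain i0 where T: "{i. i < n \<and> a i \<noteq> None} = {i0}" by (meson card_1_singletonE)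
    have l0: "lso \<sigma>' 0 = (if Suc k = n then Frame ((if 0 = i0 then Suc k else me 0) - 1) 0 0
      else Setup (Suc k) (if 0 = i0 then Suc k else me 0))"
      using setup_nst_succ[OF su a T n0] by (simp add: \<sigma>'_def)
    show ?thesis
    proof (cases "Suc k = n")
      case False
      then have "real (n - Suc k) = real (n - k) - 1" using k by (simp add: of_nat_diff)
      then show ?thesis using l0 False p0 W True by (simp add: pot_def tpot_def algebra_simps)
    next
      case True2: True
      have "Wn n 0 0 \<sigma>' = 0" by (simp add: Wn_def dn_def)
      moreover have "\<not> ind n 0 0 tag \<sigma>'" by (simp add: ind_def dn_def)
      moreover have "n - k = 1" using True2 by simp
      ultimately show ?thesis using l0 True2 p0 W True by (simp add: pot_def tpot_def rem_def)
    qed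
  qed
  then show "pot n M (nst (prot n) n gs t \<sigma> a v) \<le> pot n M \<sigma> + real (Aall gs v)
            - M * (if card {i. i < n \<and> a i \<noteq> None} = 1 then 1 else 0)"
    and "tpot n M tag (nst (prot n) n gs t \<sigma> a v) = pot n M (nst (prot n) n gs t \<sigma> a v)"
    by (simp_all add: \<sigma>'_def)
qed

lemma setup_a0:
  assumes si: "SInv n \<sigma>"
  shows "\<exists>a0. card {i. i < n \<and> a0 i \<noteq> None} = 1 \<and> (1/2) ^ n \<le> pmf (acts n \<sigma>) a0"
proof -
  obtain k me where k: "k < n" and su: "\<forall>i<n. lso \<sigma> i = Setup k (me i)"
    and card: "card {i. i < n \<and> me i \<noteq> 0} = k"
    using si unfolding SInv_def by blast
  have "\<exists>u<n. me u = 0"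
  proof (rule ccontr)
    assume nz: "\<not> (\<exists>u<n. me u = 0)"
    have "{i. i < n \<and> me i \<noteq> 0} = {..<n}"
    proof (rule set_eqI)
      fix x show "x \<in> {i. i < n \<and> me i \<noteq> 0} \<longleftrightarrow> x \<in> {..<n}" using nz by auto
    qed
    then have "card {i. i < n \<and> me i \<noteq> 0} = n" by simp
    then show False using card k by simp
  qed
  then obtain u where u: "u < n" "me u = 0" by blast
  define a0 where "a0 = (\<lambda>i. if i = u then Some (0::nat) else None)"
  have "{i. i < n \<and> a0 i \<noteq> None} = {u}" using u by (auto simp: a0_def)
  then have c1: "card {i. i < n \<and> a0 i \<noteq> None} = 1" by simp
  have out: "\<forall>x. x \<notin> {..<n} \<longrightarrow> a0 x = None" using u by (auto simp: a0_def)
  have "pmf (acts n \<sigma>) a0 = (if (\<forall>x. x \<notin> {..<n} \<longrightarrow> a0 x = None)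
      then \<Prod>i\<in>{..<n}. pmf (mp_act (prot n) (fst (\<sigma> i)) (length (snd (\<sigma> i)))) (a0 i) else 0)"
    by (rule pmf_Pi) simp
  then have pe: "pmf (acts n \<sigma>) a0 = (\<Prod>i<n. pmf (mp_act (prot n) (fst (\<sigma> i)) (length (snd (\<sigma> i)))) (a0 i))"
    using out by simp
  have "(\<Prod>i<n. (1/2::real)) \<le> (\<Prod>i<n. pmf (mp_act (prot n) (fst (\<sigma> i)) (length (snd (\<sigma> i)))) (a0 i))"
  proof (rule prod_mono, rule conjI)
    fix i assume i: "i \<in> {..<n}"
    show "0 \<le> (1/2::real)" by simp
    have act: "mp_act (prot n) (fst (\<sigma> i)) (length (snd (\<sigma> i))) = (if me i = 0 then coin else return_pmf None)"
      using su i by (simp add: prot_def lso_def)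
    show "1/2 \<le> pmf (mp_act (prot n) (fst (\<sigma> i)) (length (snd (\<sigma> i)))) (a0 i)"
    proof (cases "i = u")
      case True then show ?thesis unfolding act using u pmf_coin by (simp add: a0_def)
    next
      case False
      show ?thesis
      proof (cases "me i = 0")
        case True then show ?thesis unfolding act using False pmf_coin by (simp add: a0_def)
      next
        case F2: False then show ?thesis unfolding act using False by (simp add: a0_def)
      qed
    qed
  qed
  moreover have "(\<Prod>i<n. (1/2::real)) = (1/2)^n" by simp
  ultimately have "(1/2)^n \<le> pmf (acts n \<sigma>) a0" using pe by simp
  then show ?thesis using c1 by blast
qed

lemma setup_exp:
  assumes si: "SInv n \<sigma>" and c: "0 \<le> c" "c \<le> 1"
  shows "(\<integral>\<^sup>+a. ennreal (if card {i. i < n \<and> a i \<noteq> None} = 1 then c else 1) \<partial>acts n \<sigma>)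
         \<le> ennreal (1 - (1/2)^n * (1 - c))"
proof -
  obtain a0 where a0: "card {i. i < n \<and> a0 i \<noteq> None} = 1" "(1/2) ^ n \<le> pmf (acts n \<sigma>) a0"
    using setup_a0[OF si] by blast
  have "(\<integral>\<^sup>+a. ennreal (if card {i. i < n \<and> a i \<noteq> None} = 1 then c else 1) \<partial>acts n \<sigma>)
     \<le> (\<integral>\<^sup>+a. ennreal (if a \<in> {a0} then c else 1) \<partial>acts n \<sigma>)"
    by (intro nn_integral_mono ennreal_leI) (use a0 c in auto)
  also have "\<dots> = ennreal (c * pmf (acts n \<sigma>) a0 + 1 * (1 - pmf (acts n \<sigma>) a0))"
    using nn_two_valued[of c 1 "acts n \<sigma>" "{a0}"] c by (simp add: measure_pmf_single)
  also have "\<dots> \<le> ennreal (1 - (1/2)^n * (1 - c))"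
  proof (rule ennreal_leI)
    have "(1/2)^n * (1 - c) \<le> pmf (acts n \<sigma>) a0 * (1 - c)" using a0(2) c by (intro mult_right_mono) auto
    then show "c * pmf (acts n \<sigma>) a0 + 1 * (1 - pmf (acts n \<sigma>) a0) \<le> 1 - (1/2)^n * (1 - c)"
      by (simp add: algebra_simps)
  qed
  finally show ?thesis .
qed


definition present :: "nat \<Rightarrow> pkt \<Rightarrow> gstate \<Rightarrow> bool" where
  "present n tag \<sigma> = (\<exists>i<n. tag \<in> set (snd (\<sigma> i)))"

lemma exp_max_le: fixes c x y :: real assumes "0 \<le> c" shows "exp (c * max x y) \<le> exp (c * x) + exp (c * y)"
  using assms by (cases "x \<le> y") (auto simp: max_def mult_left_mono)

lemma present_nst:
  assumes "present n tag (nst P n gs t \<sigma> a v)"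
  shows "(\<exists>i<n. tag \<in> set (snd (\<sigma> i))) \<or> (fst tag = t \<and> v (snd tag) \<noteq> None)"
proof -
  obtain i where i: "i < n" "tag \<in> set (snd (nst P n gs t \<sigma> a v i))" using assms unfolding present_def by blast
  let ?T = "{i. i < n \<and> a i \<noteq> None} = {i}"
  have s1: "set (if ?T then tl (snd (\<sigma> i)) else snd (\<sigma> i)) \<subseteq> set (snd (\<sigma> i))"
    by (cases ?T) (auto dest: set_tl_sub)
  have s2: "set (map (\<lambda>g. (t, g)) (filter (\<lambda>g. v g = Some i) [0..<length gs])) \<subseteq> {x. fst x = t \<and> v (snd x) \<noteq> None}"
    by auto
  have "tag \<in> set (snd (\<sigma> i)) \<or> (fst tag = t \<and> v (snd tag) \<noteq> None)"
    using i(2) s1 s2 unfolding snd_nst[OF i(1), of P gs t \<sigma> a v] set_append by blast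
  then show ?thesis using i(1) by blast
qed

lemma ennreal_mult_le:
  assumes "X \<le> ennreal x" "Y \<le> ennreal y" "0 \<le> x" "0 \<le> y"
  shows "X * Y \<le> ennreal (x * y)"
proof -
  have "X * Y \<le> ennreal x * ennreal y" using assms by (intro mult_mono) auto
  then show ?thesis using assms by (simp add: ennreal_mult)
qed

lemma mono2:
  fixes h h' :: "'a \<Rightarrow> 'b \<Rightarrow> ennreal"
  assumes "\<And>a v. a \<in> set_pmf PA \<Longrightarrow> h a v \<le> h' a v"
  shows "(\<integral>\<^sup>+a. \<integral>\<^sup>+v. h a v \<partial>PR \<partial>PA) \<le> (\<integral>\<^sup>+a. \<integral>\<^sup>+v. h' a v \<partial>PR \<partial>PA)"
  by (intro nn_integral_mono_AE) (auto simp: AE_measure_pmf_iff intro!: nn_integral_mono assms)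

lemma nn_const_pmf: "(\<integral>\<^sup>+a. c \<partial>measure_pmf p) = c"
  by (simp add: measure_pmf.emeasure_space_1)

context
  fixes n :: nat and gs :: "nat option pmf list" and \<theta> \<rho> M K :: real
  assumes n0: "0 < n" and th: "0 < \<theta>" and M: "M = 1 / \<theta>"
    and K: "K = exp (inj_rate gs * (exp (2 * \<theta>) - 1))"
    and hF: "exp (- \<theta>) * K \<le> \<rho>"
    and hS: "(1 - (1/2)^n * (1 - exp (- 1))) * K \<le> \<rho>"
begin

lemma M0: "0 \<le> M" using M th by simp

lemma arrK: "(\<integral>\<^sup>+v. ennreal (exp (2 * \<theta> * real (Aall gs v))) \<partial>gens gs) \<le> ennreal K"
  unfolding K Aall_def inj_rate_def using arr_exp[of "2 * \<theta>" gs] th by simp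

lemma setup_int:
  assumes si: "SInv n \<sigma>" and that: "0 \<le> X"
  shows "(\<integral>\<^sup>+a. \<integral>\<^sup>+v. ennreal (X * (if card {i. i < n \<and> a i \<noteq> None} = 1 then exp (- 1) else 1)
            * exp (2 * \<theta> * real (Aall gs v))) \<partial>gens gs \<partial>acts n \<sigma>) \<le> ennreal (\<rho> * X)"
proof -
  have "(\<integral>\<^sup>+a. \<integral>\<^sup>+v. ennreal (X * (if card {i. i < n \<and> a i \<noteq> None} = 1 then exp (- 1) else 1)
            * exp (2 * \<theta> * real (Aall gs v))) \<partial>gens gs \<partial>acts n \<sigma>)
     \<le> (\<integral>\<^sup>+a. ennreal X * ennreal (if card {i. i < n \<and> a i \<noteq> None} = 1 then exp (- 1) else 1) \<partial>acts n \<sigma>)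
        * (\<integral>\<^sup>+v. ennreal (exp (2 * \<theta> * real (Aall gs v))) \<partial>gens gs)"
    by (rule double_bound) (use that in \<open>simp add: ennreal_mult\<close>)
  also have "(\<integral>\<^sup>+a. ennreal X * ennreal (if card {i. i < n \<and> a i \<noteq> None} = 1 then exp (- 1) else 1) \<partial>acts n \<sigma>)
     = ennreal X * (\<integral>\<^sup>+a. ennreal (if card {i. i < n \<and> a i \<noteq> None} = 1 then exp (- 1) else 1) \<partial>acts n \<sigma>)"
    by (simp add: nn_integral_cmult)
  also have "\<dots> \<le> ennreal (X * (1 - (1/2)^n * (1 - exp (- 1))))"
  proof -
    have "(\<integral>\<^sup>+a. ennreal (if card {i. i < n \<and> a i \<noteq> None} = 1 then exp (- 1) else 1) \<partial>acts n \<sigma>)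
          \<le> ennreal (1 - (1/2)^n * (1 - exp (- 1)))"
      by (rule setup_exp[OF si]) simp_all
    moreover have "0 \<le> 1 - (1/2::real)^n * (1 - exp (- 1))"
    proof -
      have "(1/2::real)^n \<le> 1" by (simp add: power_le_one)
      moreover have "0 \<le> 1 - exp (-1::real)" "1 - exp (-1::real) \<le> 1" by simp_all
      ultimately have "(1/2::real)^n * (1 - exp (- 1)) \<le> 1 * 1" by (intro mult_mono) simp_all
      then show ?thesis by simp
    qed
    ultimately show ?thesis using that by (intro ennreal_mult_le) simp_all
  qed
  finally have "(\<integral>\<^sup>+a. \<integral>\<^sup>+v. ennreal (X * (if card {i. i < n \<and> a i \<noteq> None} = 1 then exp (- 1) else 1)
            * exp (2 * \<theta> * real (Aall gs v))) \<partial>gens gs \<partial>acts n \<sigma>)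
     \<le> ennreal (X * (1 - (1/2)^n * (1 - exp (- 1)))) * (\<integral>\<^sup>+v. ennreal (exp (2 * \<theta> * real (Aall gs v))) \<partial>gens gs)"
    by (rule order_trans) (rule mult_right_mono, simp_all)
  also have "\<dots> \<le> ennreal (X * (1 - (1/2)^n * (1 - exp (- 1))) * K)"
  proof (rule ennreal_mult_le[OF order_refl arrK])
    have "(1/2::real)^n \<le> 1" by (simp add: power_le_one)
    moreover have "0 \<le> 1 - exp (-1::real)" "1 - exp (-1::real) \<le> 1" by simp_all
    ultimately have "(1/2::real)^n * (1 - exp (- 1)) \<le> 1 * 1" by (intro mult_mono) simp_all
    then show "0 \<le> X * (1 - (1/2)^n * (1 - exp (- 1)))" using that by simp
    show "0 \<le> K" by (simp add: K)
  qed
  also have "\<dots> \<le> ennreal (\<rho> * X)"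
    using mult_left_mono[OF hS that] by (intro ennreal_leI) (simp add: algebra_simps)
  finally show ?thesis .
qed

lemma pot_pos: "0 \<le> pot n M \<sigma>" using pot_nonneg[OF M0] .

lemma exp_setup_pt:
  assumes si: "SInv n \<sigma>" and a: "a \<in> set_pmf (acts n \<sigma>)"
  shows "exp (\<theta> * pot n M (nst (prot n) n gs t \<sigma> a v)) \<le>
     exp (\<theta> * pot n M \<sigma>) * (if card {i. i < n \<and> a i \<noteq> None} = 1 then exp (- 1) else 1) * exp (2 * \<theta> * real (Aall gs v))"
proof -
  have p: "pot n M (nst (prot n) n gs t \<sigma> a v) \<le> pot n M \<sigma> + real (Aall gs v)
            - M * (if card {i. i < n \<and> a i \<noteq> None} = 1 then 1 else 0)"
    by (rule setup_pot(1)[OF n0 si a])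
  have tm: "\<theta> * M = 1" using th M by simp
  have "\<theta> * pot n M (nst (prot n) n gs t \<sigma> a v) \<le> \<theta> * pot n M \<sigma> + (if card {i. i < n \<and> a i \<noteq> None} = 1 then - 1 else 0) + 2 * \<theta> * real (Aall gs v)"
  proof -
    have "\<theta> * pot n M (nst (prot n) n gs t \<sigma> a v) \<le> \<theta> * (pot n M \<sigma> + real (Aall gs v)
            - M * (if card {i. i < n \<and> a i \<noteq> None} = 1 then 1 else 0))"
      using p th by (intro mult_left_mono) simp_all
    also have "\<dots> = \<theta> * pot n M \<sigma> + \<theta> * real (Aall gs v) + (if card {i. i < n \<and> a i \<noteq> None} = 1 then - 1 else 0)"
      using tm by (simp add: algebra_simps)
    also have "\<dots> \<le> \<theta> * pot n M \<sigma> + (if card {i. i < n \<and> a i \<noteq> None} = 1 then - 1 else 0) + 2 * \<theta> * real (Aall gs v)"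
      using th by simp
    finally show ?thesis .
  qed
  then have "exp (\<theta> * pot n M (nst (prot n) n gs t \<sigma> a v)) \<le> exp (\<theta> * pot n M \<sigma> + (if card {i. i < n \<and> a i \<noteq> None} = 1 then - 1 else 0) + 2 * \<theta> * real (Aall gs v))"
    by simp
  also have "\<dots> = exp (\<theta> * pot n M \<sigma>) * (if card {i. i < n \<and> a i \<noteq> None} = 1 then exp (- 1) else 1) * exp (2 * \<theta> * real (Aall gs v))"
    by (simp add: exp_add)
  finally show ?thesis .
qed

lemma drift:
  assumes inv: "Inv n t \<sigma>"
  shows "(\<integral>\<^sup>+\<sigma>'. ennreal (exp (\<theta> * pot n M \<sigma>')) \<partial>mac_step (prot n) n gs t \<sigma>)
          \<le> ennreal (\<rho> * exp (\<theta> * pot n M \<sigma>)) + ennreal (exp (2 * real n * \<theta>) * K)"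
proof -
  have SF: "SInv n \<sigma> \<or> FInv n \<sigma>" using inv by (simp add: Inv_def)
  have "(\<integral>\<^sup>+a. \<integral>\<^sup>+v. ennreal (exp (\<theta> * pot n M (nst (prot n) n gs t \<sigma> a v))) \<partial>gens gs \<partial>acts n \<sigma>)
          \<le> ennreal (\<rho> * exp (\<theta> * pot n M \<sigma>)) + ennreal (exp (2 * real n * \<theta>) * K)"
  proof (cases "SInv n \<sigma>")
    case True
    have "(\<integral>\<^sup>+a. \<integral>\<^sup>+v. ennreal (exp (\<theta> * pot n M (nst (prot n) n gs t \<sigma> a v))) \<partial>gens gs \<partial>acts n \<sigma>)
      \<le> (\<integral>\<^sup>+a. \<integral>\<^sup>+v. ennreal (exp (\<theta> * pot n M \<sigma>) * (if card {i. i < n \<and> a i \<noteq> None} = 1 then exp (- 1) else 1)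
            * exp (2 * \<theta> * real (Aall gs v))) \<partial>gens gs \<partial>acts n \<sigma>)"
      by (rule mono2) (intro ennreal_leI exp_setup_pt[OF True])
    also have "\<dots> \<le> ennreal (\<rho> * exp (\<theta> * pot n M \<sigma>))"
      by (rule setup_int[OF True]) simp
    finally show ?thesis by (rule order_trans) simp
  next
    case False
    then have fi: "FInv n \<sigma>" using SF by blast
    let ?C = "exp (\<theta> * (pot n M \<sigma> - 1)) + exp (\<theta> * (2 * real n))"
    have "(\<integral>\<^sup>+a. \<integral>\<^sup>+v. ennreal (exp (\<theta> * pot n M (nst (prot n) n gs t \<sigma> a v))) \<partial>gens gs \<partial>acts n \<sigma>)
      \<le> (\<integral>\<^sup>+a. ennreal ?C \<partial>acts n \<sigma>) * (\<integral>\<^sup>+v. ennreal (exp (2 * \<theta> * real (Aall gs v))) \<partial>gens gs)"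
    proof (rule double_bound)
      fix a v assume a: "a \<in> set_pmf (acts n \<sigma>)"
      have p: "pot n M (nst (prot n) n gs t \<sigma> a v) \<le> max (pot n M \<sigma> - 1) (2 * real n) + 2 * real (Aall gs v)"
        by (rule frame_pot(1)[OF n0 fi a])
      have "exp (\<theta> * pot n M (nst (prot n) n gs t \<sigma> a v)) \<le> exp (\<theta> * (max (pot n M \<sigma> - 1) (2 * real n) + 2 * real (Aall gs v)))"
        using p th by (simp add: mult_left_mono)
      also have "\<dots> = exp (\<theta> * max (pot n M \<sigma> - 1) (2 * real n)) * exp (2 * \<theta> * real (Aall gs v))"
        by (simp add: distrib_left exp_add)
      also have "\<dots> \<le> ?C * exp (2 * \<theta> * real (Aall gs v))"
        using exp_max_le[of \<theta> "pot n M \<sigma> - 1" "2 * real n"] th by (intro mult_right_mono) simp_all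
      finally have "ennreal (exp (\<theta> * pot n M (nst (prot n) n gs t \<sigma> a v))) \<le> ennreal (?C * exp (2 * \<theta> * real (Aall gs v)))"
        by (rule ennreal_leI)
      also have "\<dots> = ennreal ?C * ennreal (exp (2 * \<theta> * real (Aall gs v)))"
        by (rule ennreal_mult) simp_all
      finally show "ennreal (exp (\<theta> * pot n M (nst (prot n) n gs t \<sigma> a v))) \<le> ennreal ?C * ennreal (exp (2 * \<theta> * real (Aall gs v)))" .
    qed
    also have "\<dots> \<le> ennreal (?C * K)"
      unfolding nn_const_pmf by (rule ennreal_mult_le[OF order_refl arrK]) (simp_all add: K)
    also have "ennreal (?C * K) \<le> ennreal (\<rho> * exp (\<theta> * pot n M \<sigma>) + exp (2 * real n * \<theta>) * K)"
    proof (rule ennreal_leI)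
      have "?C * K = exp (\<theta> * pot n M \<sigma>) * (exp (- \<theta>) * K) + exp (2 * real n * \<theta>) * K"
        by (simp add: algebra_simps exp_diff exp_minus field_simps)
      also have "\<dots> \<le> \<rho> * exp (\<theta> * pot n M \<sigma>) + exp (2 * real n * \<theta>) * K"
        using hF by (simp add: mult.commute)
      finally show "?C * K \<le> \<rho> * exp (\<theta> * pot n M \<sigma>) + exp (2 * real n * \<theta>) * K" .
    qed
    also have "\<dots> = ennreal (\<rho> * exp (\<theta> * pot n M \<sigma>)) + ennreal (exp (2 * real n * \<theta>) * K)"
    proof (rule ennreal_plus)
      have "0 \<le> exp (- \<theta>) * K" by (simp add: K)
      then have "0 \<le> \<rho>" using hF by linarith
      then show "0 \<le> \<rho> * exp (\<theta> * pot n M \<sigma>)" by simp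
      show "0 \<le> exp (2 * real n * \<theta>) * K" by (simp add: K)
    qed
    finally show ?thesis .
  qed
  then show ?thesis unfolding nn_step .
qed

lemma tag_drift:
  assumes inv: "Inv n t \<sigma>" and ft: "fst tag \<noteq> t"
  shows "(\<integral>\<^sup>+\<sigma>'. ennreal (if present n tag \<sigma>' then exp (\<theta> * tpot n M tag \<sigma>') else 0) \<partial>mac_step (prot n) n gs t \<sigma>)
          \<le> ennreal (\<rho> * (if present n tag \<sigma> then exp (\<theta> * tpot n M tag \<sigma>) else 0))"
proof -
  have SF: "SInv n \<sigma> \<or> FInv n \<sigma>" using inv by (simp add: Inv_def)
  have r0: "0 \<le> \<rho>"
  proof -
    have "0 \<le> exp (- \<theta>) * K" by (simp add: K)
    then show "0 \<le> \<rho>" using hF by linarith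
  qed
  let ?F = "\<lambda>\<sigma>'. ennreal (if present n tag \<sigma>' then exp (\<theta> * tpot n M tag \<sigma>') else 0)"
  have "(\<integral>\<^sup>+a. \<integral>\<^sup>+v. ?F (nst (prot n) n gs t \<sigma> a v) \<partial>gens gs \<partial>acts n \<sigma>)
          \<le> ennreal (\<rho> * (if present n tag \<sigma> then exp (\<theta> * tpot n M tag \<sigma>) else 0))"
  proof (cases "present n tag \<sigma>")
    case False
    have "(\<integral>\<^sup>+a. \<integral>\<^sup>+v. ?F (nst (prot n) n gs t \<sigma> a v) \<partial>gens gs \<partial>acts n \<sigma>)
        \<le> (\<integral>\<^sup>+a. \<integral>\<^sup>+v. 0 \<partial>gens gs \<partial>acts n \<sigma>)"
    proof (rule mono2)
      fix a v
      have "\<not> present n tag (nst (prot n) n gs t \<sigma> a v)"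
        using present_nst[of n tag "prot n" gs t \<sigma> a v] False ft unfolding present_def by blast
      then show "?F (nst (prot n) n gs t \<sigma> a v) \<le> 0" by simp
    qed
    then show ?thesis by simp
  next
    case True
    show ?thesis
    proof (cases "SInv n \<sigma>")
      case si: True
      have "(\<integral>\<^sup>+a. \<integral>\<^sup>+v. ?F (nst (prot n) n gs t \<sigma> a v) \<partial>gens gs \<partial>acts n \<sigma>)
        \<le> (\<integral>\<^sup>+a. \<integral>\<^sup>+v. ennreal (exp (\<theta> * pot n M \<sigma>) * (if card {i. i < n \<and> a i \<noteq> None} = 1 then exp (- 1) else 1)
            * exp (2 * \<theta> * real (Aall gs v))) \<partial>gens gs \<partial>acts n \<sigma>)"
      proof (rule mono2)
        fix a v assume a: "a \<in> set_pmf (acts n \<sigma>)"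
        have "?F (nst (prot n) n gs t \<sigma> a v) \<le> ennreal (exp (\<theta> * tpot n M tag (nst (prot n) n gs t \<sigma> a v)))"
          by (intro ennreal_leI) auto
        also have "\<dots> = ennreal (exp (\<theta> * pot n M (nst (prot n) n gs t \<sigma> a v)))"
          using setup_pot(2)[OF n0 si a] by simp
        also have "\<dots> \<le> ennreal (exp (\<theta> * pot n M \<sigma>) * (if card {i. i < n \<and> a i \<noteq> None} = 1 then exp (- 1) else 1)
            * exp (2 * \<theta> * real (Aall gs v)))"
          by (intro ennreal_leI exp_setup_pt[OF si a])
        finally show "?F (nst (prot n) n gs t \<sigma> a v) \<le> ennreal (exp (\<theta> * pot n M \<sigma>) * (if card {i. i < n \<and> a i \<noteq> None} = 1 then exp (- 1) else 1)
            * exp (2 * \<theta> * real (Aall gs v)))" .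
      qed
      also have "\<dots> \<le> ennreal (\<rho> * exp (\<theta> * pot n M \<sigma>))"
        by (rule setup_int[OF si]) simp
      also have "pot n M \<sigma> = tpot n M tag \<sigma>"
        using setup_pot(3)[OF n0 si] set_pmf_not_empty[of "acts n \<sigma>"] by (metis ex_in_conv)
      finally show ?thesis using True by simp
    next
      case False
      then have fi: "FInv n \<sigma>" using SF by blast
      have "(\<integral>\<^sup>+a. \<integral>\<^sup>+v. ?F (nst (prot n) n gs t \<sigma> a v) \<partial>gens gs \<partial>acts n \<sigma>)
        \<le> (\<integral>\<^sup>+a. ennreal (exp (\<theta> * (tpot n M tag \<sigma> - 1))) \<partial>acts n \<sigma>) * (\<integral>\<^sup>+v. ennreal (exp (2 * \<theta> * real (Aall gs v))) \<partial>gens gs)"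
      proof (rule double_bound)
        fix a v assume a: "a \<in> set_pmf (acts n \<sigma>)"
        show "?F (nst (prot n) n gs t \<sigma> a v) \<le> ennreal (exp (\<theta> * (tpot n M tag \<sigma> - 1))) * ennreal (exp (2 * \<theta> * real (Aall gs v)))"
        proof (cases "present n tag (nst (prot n) n gs t \<sigma> a v)")
          case pr: True
          have tp: "tpot n M tag (nst (prot n) n gs t \<sigma> a v) \<le> tpot n M tag \<sigma> - 1 + real (Aall gs v)"
            by (rule frame_pot(2)[OF n0 fi a]) (use pr ft in \<open>auto simp: present_def\<close>)
          have "exp (\<theta> * tpot n M tag (nst (prot n) n gs t \<sigma> a v)) \<le> exp (\<theta> * (tpot n M tag \<sigma> - 1 + real (Aall gs v)))"
            using tp th by (simp add: mult_left_mono)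
          also have "\<dots> \<le> exp (\<theta> * (tpot n M tag \<sigma> - 1) + 2 * \<theta> * real (Aall gs v))"
            using th by (simp add: algebra_simps)
          also have "\<dots> = exp (\<theta> * (tpot n M tag \<sigma> - 1)) * exp (2 * \<theta> * real (Aall gs v))"
            by (simp add: exp_add)
          finally have "ennreal (exp (\<theta> * tpot n M tag (nst (prot n) n gs t \<sigma> a v))) \<le> ennreal (exp (\<theta> * (tpot n M tag \<sigma> - 1)) * exp (2 * \<theta> * real (Aall gs v)))"
            by (rule ennreal_leI)
          also have "\<dots> = ennreal (exp (\<theta> * (tpot n M tag \<sigma> - 1))) * ennreal (exp (2 * \<theta> * real (Aall gs v)))"
            by (rule ennreal_mult) simp_all
          finally show ?thesis using pr by simp
        qed simp
      qed
      also have "\<dots> \<le> ennreal (exp (\<theta> * (tpot n M tag \<sigma> - 1)) * K)"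
        unfolding nn_const_pmf by (rule ennreal_mult_le[OF order_refl arrK]) (simp_all add: K)
      also have "\<dots> \<le> ennreal (\<rho> * exp (\<theta> * tpot n M tag \<sigma>))"
      proof (rule ennreal_leI)
        have "exp (\<theta> * (tpot n M tag \<sigma> - 1)) * K = exp (\<theta> * tpot n M tag \<sigma>) * (exp (- \<theta>) * K)"
          by (simp add: algebra_simps exp_diff exp_minus field_simps)
        also have "\<dots> \<le> exp (\<theta> * tpot n M tag \<sigma>) * \<rho>" using hF by (intro mult_left_mono) simp_all
        finally show "exp (\<theta> * (tpot n M tag \<sigma> - 1)) * K \<le> \<rho> * exp (\<theta> * tpot n M tag \<sigma>)" by (simp add: mult.commute)
      qed
      finally show ?thesis using True by simp
    qed
  qed
  then show ?thesis unfolding nn_step .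
qed

lemma tag_init:
  assumes inv: "Inv n s \<sigma>" and g0: "g0 < length gs"
  shows "(\<integral>\<^sup>+\<sigma>'. ennreal (if present n (s, g0) \<sigma>' then exp (\<theta> * tpot n M (s, g0) \<sigma>') else 0) \<partial>mac_step (prot n) n gs s \<sigma>)
          \<le> ennreal (exp (\<theta> * (pot n M \<sigma> + 3 * real n)) * (measure_pmf.prob (gs ! g0) {x. x \<noteq> None} * exp (2 * \<theta>) * K))"
proof -
  have SF: "SInv n \<sigma> \<or> FInv n \<sigma>" using inv by (simp add: Inv_def)
  have tim: "\<forall>i<n. \<forall>x\<in>set (snd (\<sigma> i)). fst x < s" using inv by (simp add: Inv_def)
  let ?F = "\<lambda>\<sigma>'. ennreal (if present n (s, g0) \<sigma>' then exp (\<theta> * tpot n M (s, g0) \<sigma>') else 0)"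
  let ?X = "exp (\<theta> * (pot n M \<sigma> + 3 * real n))"
  have "(\<integral>\<^sup>+a. \<integral>\<^sup>+v. ?F (nst (prot n) n gs s \<sigma> a v) \<partial>gens gs \<partial>acts n \<sigma>)
     \<le> (\<integral>\<^sup>+a. ennreal ?X \<partial>acts n \<sigma>) *
        (\<integral>\<^sup>+v. indicator {v. v g0 \<noteq> None} v * ennreal (exp (2 * \<theta> * real (\<Sum>g<length gs. if v g \<noteq> None then 1 else 0::nat))) \<partial>gens gs)"
  proof (rule double_bound)
    fix a v assume a: "a \<in> set_pmf (acts n \<sigma>)"
    let ?s' = "nst (prot n) n gs s \<sigma> a v"
    show "?F ?s' \<le> ennreal ?X * (indicator {v. v g0 \<noteq> None} v * ennreal (exp (2 * \<theta> * real (\<Sum>g<length gs. if v g \<noteq> None then 1 else 0::nat))))"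
    proof (cases "present n (s, g0) ?s'")
      case pr: True
      have vg: "v g0 \<noteq> None"
        using present_nst[OF pr] tim by fastforce
      have pp: "pot n M ?s' \<le> pot n M \<sigma> + 2 * real n + 2 * real (Aall gs v)"
      proof (cases "SInv n \<sigma>")
        case True
        have "pot n M ?s' \<le> pot n M \<sigma> + real (Aall gs v) - M * (if card {i. i < n \<and> a i \<noteq> None} = 1 then 1 else 0)"
          by (rule setup_pot(1)[OF n0 True a])
        then show ?thesis using M0 by (auto split: if_splits)
      next
        case False
        then have fi: "FInv n \<sigma>" using SF by blast
        have "pot n M ?s' \<le> max (pot n M \<sigma> - 1) (2 * real n) + 2 * real (Aall gs v)"
          by (rule frame_pot(1)[OF n0 fi a])
        then show ?thesis using pot_pos[of \<sigma>] by auto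
      qed
      have "tpot n M (s, g0) ?s' \<le> pot n M \<sigma> + 3 * real n + 2 * real (Aall gs v)"
        using tpot_le[OF M0, of n "(s, g0)" ?s'] pp by linarith
      then have "exp (\<theta> * tpot n M (s, g0) ?s') \<le> exp (\<theta> * (pot n M \<sigma> + 3 * real n + 2 * real (Aall gs v)))"
        using th by (simp add: mult_left_mono)
      also have "\<dots> = ?X * exp (2 * \<theta> * real (Aall gs v))"
        by (simp add: algebra_simps exp_add[symmetric])
      finally have "ennreal (exp (\<theta> * tpot n M (s, g0) ?s')) \<le> ennreal (?X * exp (2 * \<theta> * real (Aall gs v)))"
        by (rule ennreal_leI)
      also have "\<dots> = ennreal ?X * ennreal (exp (2 * \<theta> * real (Aall gs v)))"
        by (rule ennreal_mult) simp_all
      finally show ?thesis using pr vg by (simp add: Aall_def)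
    qed simp
  qed
  also have "\<dots> \<le> ennreal (?X * (measure_pmf.prob (gs ! g0) {x. x \<noteq> None} * exp (2 * \<theta>) * K))"
    unfolding nn_const_pmf
  proof (rule ennreal_mult_le[OF order_refl])
    show "(\<integral>\<^sup>+v. indicator {v. v g0 \<noteq> None} v * ennreal (exp (2 * \<theta> * real (\<Sum>g<length gs. if v g \<noteq> None then 1 else 0::nat))) \<partial>gens gs)
      \<le> ennreal (measure_pmf.prob (gs ! g0) {x. x \<noteq> None} * exp (2 * \<theta>) * K)"
      using arr_tag[of "2 * \<theta>" g0 gs] th g0 by (simp add: K inj_rate_def)
  qed (simp_all add: K)
  finally show ?thesis unfolding nn_step .
qed

end


context
  fixes n :: nat and gs :: "nat option pmf list" and \<theta> \<rho> M K :: real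
  assumes n0: "0 < n" and th: "0 < \<theta>" and M: "M = 1 / \<theta>"
    and K: "K = exp (inj_rate gs * (exp (2 * \<theta>) - 1))"
    and hF: "exp (- \<theta>) * K \<le> \<rho>"
    and hS: "(1 - (1/2)^n * (1 - exp (- 1))) * K \<le> \<rho>"
    and r1: "\<rho> < 1"
begin

lemma r0: "0 \<le> \<rho>"
proof -
  have "0 \<le> exp (- \<theta>) * K" by (simp add: K)
  then show "0 \<le> \<rho>" using hF by linarith
qed

lemma K0: "0 \<le> K" by (simp add: K)

definition Cb :: real where
  "Cb = max (exp (\<theta> * (M * real n + real n + 1))) (exp (2 * real n * \<theta>) * K / (1 - \<rho>))"

lemma Cb0: "0 \<le> Cb" unfolding Cb_def by (rule order_trans[OF _ max.cobounded1]) simp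

lemma run_bound: "(\<integral>\<^sup>+\<sigma>. ennreal (exp (\<theta> * pot n M \<sigma>)) \<partial>mac_run (prot n) n gs t) \<le> ennreal Cb"
proof (induction t)
  case 0
  have "pot n M (\<lambda>i. (to_nat (Setup 0 0), [])) = M * real n + real n + 1"
    by (simp add: pot_def lso_def Wt_def)
  moreover have "exp (\<theta> * (M * real n + real n + 1)) \<le> Cb" unfolding Cb_def by (rule max.cobounded1)
  ultimately show ?case by (simp add: prot_def ennreal_leI)
next
  case (Suc t)
  let ?b = "exp (2 * real n * \<theta>) * K"
  have "(\<integral>\<^sup>+\<sigma>. ennreal (exp (\<theta> * pot n M \<sigma>)) \<partial>mac_run (prot n) n gs (Suc t))
      = (\<integral>\<^sup>+\<sigma>. \<integral>\<^sup>+\<sigma>'. ennreal (exp (\<theta> * pot n M \<sigma>')) \<partial>mac_step (prot n) n gs t \<sigma> \<partial>mac_run (prot n) n gs t)"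
    by simp
  also have "\<dots> \<le> (\<integral>\<^sup>+\<sigma>. ennreal \<rho> * ennreal (exp (\<theta> * pot n M \<sigma>)) + ennreal ?b \<partial>mac_run (prot n) n gs t)"
  proof (rule nn_integral_mono_AE)
    show "AE \<sigma> in measure_pmf (mac_run (prot n) n gs t). (\<integral>\<^sup>+\<sigma>'. ennreal (exp (\<theta> * pot n M \<sigma>')) \<partial>mac_step (prot n) n gs t \<sigma>)
      \<le> ennreal \<rho> * ennreal (exp (\<theta> * pot n M \<sigma>)) + ennreal ?b"
      unfolding AE_measure_pmf_iff
    proof
      fix \<sigma> assume "\<sigma> \<in> set_pmf (mac_run (prot n) n gs t)"
      then have "Inv n t \<sigma>" by (rule Inv_run[OF n0])
      then have "(\<integral>\<^sup>+\<sigma>'. ennreal (exp (\<theta> * pot n M \<sigma>')) \<partial>mac_step (prot n) n gs t \<sigma>)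
          \<le> ennreal (\<rho> * exp (\<theta> * pot n M \<sigma>)) + ennreal ?b"
        by (rule drift[OF n0 th M K hF hS])
      then show "(\<integral>\<^sup>+\<sigma>'. ennreal (exp (\<theta> * pot n M \<sigma>')) \<partial>mac_step (prot n) n gs t \<sigma>)
          \<le> ennreal \<rho> * ennreal (exp (\<theta> * pot n M \<sigma>)) + ennreal ?b"
        using r0 by (simp add: ennreal_mult)
    qed
  qed
  also have "\<dots> = ennreal \<rho> * (\<integral>\<^sup>+\<sigma>. ennreal (exp (\<theta> * pot n M \<sigma>)) \<partial>mac_run (prot n) n gs t) + ennreal ?b"
    by (simp add: nn_integral_add nn_integral_cmult nn_const_pmf)
  also have "\<dots> \<le> ennreal \<rho> * ennreal Cb + ennreal ?b"
    using Suc.IH by (intro add_mono mult_left_mono) simp_all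
  also have "\<dots> = ennreal (\<rho> * Cb + ?b)"
    using r0 Cb0 K0 by (simp add: ennreal_mult ennreal_plus)
  also have "\<dots> \<le> ennreal Cb"
  proof (rule ennreal_leI)
    have "?b / (1 - \<rho>) \<le> Cb" by (simp add: Cb_def)
    then have "?b \<le> Cb * (1 - \<rho>)" using r1 by (simp add: divide_le_eq)
    then show "\<rho> * Cb + ?b \<le> Cb" by (simp add: algebra_simps)
  qed
  finally show ?case .
qed

lemma queue_bound:
  assumes i: "i < n"
  shows "(\<integral>\<^sup>+\<sigma>. ennreal (real (length (snd (\<sigma> i)))) \<partial>mac_run (prot n) n gs t) \<le> ennreal (Cb / \<theta>)"
proof -
  have "(\<integral>\<^sup>+\<sigma>. ennreal (real (length (snd (\<sigma> i)))) \<partial>mac_run (prot n) n gs t)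
      \<le> (\<integral>\<^sup>+\<sigma>. ennreal (1 / \<theta>) * ennreal (exp (\<theta> * pot n M \<sigma>)) \<partial>mac_run (prot n) n gs t)"
  proof (rule nn_integral_mono)
    fix \<sigma>
    have "length (snd (\<sigma> i)) \<le> Wt n \<sigma>" unfolding Wt_def using i by (intro member_le_sum) auto
    then have "real (length (snd (\<sigma> i))) \<le> pot n M \<sigma>"
      using Wt_le_pot[of M n \<sigma>] M th by (simp add: order_trans)
    also have "\<dots> \<le> exp (\<theta> * pot n M \<sigma>) / \<theta>"
    proof -
      have "\<theta> * pot n M \<sigma> \<le> exp (\<theta> * pot n M \<sigma>)" using exp_ge_add_one_self[of "\<theta> * pot n M \<sigma>"] by linarith
      then show ?thesis using th by (simp add: field_simps)
    qed
    finally have "ennreal (real (length (snd (\<sigma> i)))) \<le> ennreal (1 / \<theta> * exp (\<theta> * pot n M \<sigma>))"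
      by (intro ennreal_leI) simp
    also have "\<dots> = ennreal (1 / \<theta>) * ennreal (exp (\<theta> * pot n M \<sigma>))"
      using th by (intro ennreal_mult) simp_all
    finally show "ennreal (real (length (snd (\<sigma> i)))) \<le> ennreal (1 / \<theta>) * ennreal (exp (\<theta> * pot n M \<sigma>))" .
  qed
  also have "\<dots> = ennreal (1 / \<theta>) * (\<integral>\<^sup>+\<sigma>. ennreal (exp (\<theta> * pot n M \<sigma>)) \<partial>mac_run (prot n) n gs t)"
    by (simp add: nn_integral_cmult)
  also have "\<dots> \<le> ennreal (1 / \<theta>) * ennreal Cb"
    using run_bound by (intro mult_left_mono) simp_all
  also have "\<dots> = ennreal (Cb / \<theta>)"
    using th Cb0 by (simp add: ennreal_mult[symmetric])
  finally show ?thesis .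
qed

definition Dc :: real where "Dc = exp (\<theta> * 3 * real n) * exp (2 * \<theta>) * K * Cb"

lemma Dc0: "0 \<le> Dc" using K0 Cb0 unfolding Dc_def by simp

lemma tag_bound:
  assumes g0: "g0 < length gs"
  shows "(\<integral>\<^sup>+\<sigma>. ennreal (if present n (s, g0) \<sigma> then exp (\<theta> * tpot n M (s, g0) \<sigma>) else 0) \<partial>mac_run (prot n) n gs (Suc s + k))
     \<le> ennreal (\<rho> ^ k * (Dc * measure_pmf.prob (gs ! g0) {x. x \<noteq> None}))"
proof (induction k)
  case 0
  let ?p = "measure_pmf.prob (gs ! g0) {x. x \<noteq> None}"
  have "(\<integral>\<^sup>+\<sigma>. ennreal (if present n (s, g0) \<sigma> then exp (\<theta> * tpot n M (s, g0) \<sigma>) else 0) \<partial>mac_run (prot n) n gs (Suc s))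
     = (\<integral>\<^sup>+\<sigma>. \<integral>\<^sup>+\<sigma>'. ennreal (if present n (s, g0) \<sigma>' then exp (\<theta> * tpot n M (s, g0) \<sigma>') else 0) \<partial>mac_step (prot n) n gs s \<sigma> \<partial>mac_run (prot n) n gs s)"
    by simp
  also have "\<dots> \<le> (\<integral>\<^sup>+\<sigma>. ennreal (exp (\<theta> * 3 * real n) * (?p * exp (2 * \<theta>) * K)) * ennreal (exp (\<theta> * pot n M \<sigma>)) \<partial>mac_run (prot n) n gs s)"
  proof (rule nn_integral_mono_AE)
    show "AE \<sigma> in measure_pmf (mac_run (prot n) n gs s).
      (\<integral>\<^sup>+\<sigma>'. ennreal (if present n (s, g0) \<sigma>' then exp (\<theta> * tpot n M (s, g0) \<sigma>') else 0) \<partial>mac_step (prot n) n gs s \<sigma>)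
      \<le> ennreal (exp (\<theta> * 3 * real n) * (?p * exp (2 * \<theta>) * K)) * ennreal (exp (\<theta> * pot n M \<sigma>))"
      unfolding AE_measure_pmf_iff
    proof
      fix \<sigma> assume "\<sigma> \<in> set_pmf (mac_run (prot n) n gs s)"
      then have "Inv n s \<sigma>" by (rule Inv_run[OF n0])
      then have "(\<integral>\<^sup>+\<sigma>'. ennreal (if present n (s, g0) \<sigma>' then exp (\<theta> * tpot n M (s, g0) \<sigma>') else 0) \<partial>mac_step (prot n) n gs s \<sigma>)
          \<le> ennreal (exp (\<theta> * (pot n M \<sigma> + 3 * real n)) * (?p * exp (2 * \<theta>) * K))"
        by (rule tag_init[OF n0 th M K hF hS _ g0])
      also have "exp (\<theta> * (pot n M \<sigma> + 3 * real n)) * (?p * exp (2 * \<theta>) * K)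
          = (exp (\<theta> * 3 * real n) * (?p * exp (2 * \<theta>) * K)) * exp (\<theta> * pot n M \<sigma>)"
        by (simp add: distrib_left exp_add algebra_simps)
      also have "ennreal \<dots> = ennreal (exp (\<theta> * 3 * real n) * (?p * exp (2 * \<theta>) * K)) * ennreal (exp (\<theta> * pot n M \<sigma>))"
        by (rule ennreal_mult) (simp_all add: K0)
      finally show "(\<integral>\<^sup>+\<sigma>'. ennreal (if present n (s, g0) \<sigma>' then exp (\<theta> * tpot n M (s, g0) \<sigma>') else 0) \<partial>mac_step (prot n) n gs s \<sigma>)
          \<le> ennreal (exp (\<theta> * 3 * real n) * (?p * exp (2 * \<theta>) * K)) * ennreal (exp (\<theta> * pot n M \<sigma>))" .
    qed
  qed
  also have "\<dots> = ennreal (exp (\<theta> * 3 * real n) * (?p * exp (2 * \<theta>) * K)) * (\<integral>\<^sup>+\<sigma>. ennreal (exp (\<theta> * pot n M \<sigma>)) \<partial>mac_run (prot n) n gs s)"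
    by (simp add: nn_integral_cmult)
  also have "\<dots> \<le> ennreal (exp (\<theta> * 3 * real n) * (?p * exp (2 * \<theta>) * K)) * ennreal Cb"
    using run_bound by (intro mult_left_mono) simp_all
  also have "\<dots> = ennreal (\<rho> ^ 0 * (Dc * ?p))"
  proof -
    have "exp (\<theta> * 3 * real n) * (?p * exp (2 * \<theta>) * K) * Cb = \<rho> ^ 0 * (Dc * ?p)"
      unfolding Dc_def by (simp add: algebra_simps)
    moreover have "0 \<le> exp (\<theta> * 3 * real n) * (?p * exp (2 * \<theta>) * K)" using K0 by simp
    ultimately show ?thesis using Cb0 by (metis ennreal_mult)
  qed
  finally show ?case by simp
next
  case (Suc k)
  let ?F = "\<lambda>\<sigma>. ennreal (if present n (s, g0) \<sigma> then exp (\<theta> * tpot n M (s, g0) \<sigma>) else 0)"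
  have "(\<integral>\<^sup>+\<sigma>. ?F \<sigma> \<partial>mac_run (prot n) n gs (Suc s + Suc k))
     = (\<integral>\<^sup>+\<sigma>. \<integral>\<^sup>+\<sigma>'. ?F \<sigma>' \<partial>mac_step (prot n) n gs (Suc s + k) \<sigma> \<partial>mac_run (prot n) n gs (Suc s + k))"
    by simp
  also have "\<dots> \<le> (\<integral>\<^sup>+\<sigma>. ennreal \<rho> * ?F \<sigma> \<partial>mac_run (prot n) n gs (Suc s + k))"
  proof (rule nn_integral_mono_AE)
    show "AE \<sigma> in measure_pmf (mac_run (prot n) n gs (Suc s + k)).
      (\<integral>\<^sup>+\<sigma>'. ?F \<sigma>' \<partial>mac_step (prot n) n gs (Suc s + k) \<sigma>) \<le> ennreal \<rho> * ?F \<sigma>"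
      unfolding AE_measure_pmf_iff
    proof
      fix \<sigma> assume "\<sigma> \<in> set_pmf (mac_run (prot n) n gs (Suc s + k))"
      then have "Inv n (Suc s + k) \<sigma>" by (rule Inv_run[OF n0])
      then have "(\<integral>\<^sup>+\<sigma>'. ?F \<sigma>' \<partial>mac_step (prot n) n gs (Suc s + k) \<sigma>)
          \<le> ennreal (\<rho> * (if present n (s, g0) \<sigma> then exp (\<theta> * tpot n M (s, g0) \<sigma>) else 0))"
        by (rule tag_drift[OF n0 th M K hF hS]) simp
      then show "(\<integral>\<^sup>+\<sigma>'. ?F \<sigma>' \<partial>mac_step (prot n) n gs (Suc s + k) \<sigma>) \<le> ennreal \<rho> * ?F \<sigma>"
        using r0 by (simp add: ennreal_mult)
    qed
  qed
  also have "\<dots> = ennreal \<rho> * (\<integral>\<^sup>+\<sigma>. ?F \<sigma> \<partial>mac_run (prot n) n gs (Suc s + k))"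
    by (simp add: nn_integral_cmult)
  also have "\<dots> \<le> ennreal \<rho> * ennreal (\<rho> ^ k * (Dc * measure_pmf.prob (gs ! g0) {x. x \<noteq> None}))"
    using Suc.IH by (intro mult_left_mono) simp_all
  also have "\<dots> = ennreal (\<rho> ^ Suc k * (Dc * measure_pmf.prob (gs ! g0) {x. x \<noteq> None}))"
    using r0 Dc0 by (simp add: ennreal_mult[symmetric] algebra_simps)
  finally show ?case .
qed

lemma prob_le_F:
  fixes p :: "gstate pmf"
  assumes that: "(\<integral>\<^sup>+\<sigma>. ennreal (if present n tag \<sigma> then exp (\<theta> * tpot n M tag \<sigma>) else 0) \<partial>p) \<le> ennreal x" "0 \<le> x"
  shows "measure_pmf.prob p {\<sigma>. present n tag \<sigma>} \<le> x"
proof -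
  have "emeasure (measure_pmf p) {\<sigma>. present n tag \<sigma>} = (\<integral>\<^sup>+\<sigma>. indicator {\<sigma>. present n tag \<sigma>} \<sigma> \<partial>p)"
    by simp
  also have "\<dots> \<le> (\<integral>\<^sup>+\<sigma>. ennreal (if present n tag \<sigma> then exp (\<theta> * tpot n M tag \<sigma>) else 0) \<partial>p)"
  proof (rule nn_integral_mono)
    fix \<sigma>
    have "0 \<le> \<theta> * tpot n M tag \<sigma>" using tpot_nonneg[of M n tag \<sigma>] M th by simp
    then show "indicator {\<sigma>. present n tag \<sigma>} \<sigma> \<le> ennreal (if present n tag \<sigma> then exp (\<theta> * tpot n M tag \<sigma>) else 0)"
      by (auto simp: indicator_def)
  qed
  also have "\<dots> \<le> ennreal x" by (rule that(1))
  finally show ?thesis using that(2) by (simp add: measure_pmf.emeasure_eq_measure)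
qed

lemma stable: "mac_stable (prot n) n gs"
  unfolding mac_stable_def
proof (intro conjI)
  show "\<exists>B. \<forall>t i. i < n \<longrightarrow> (\<integral>\<^sup>+\<sigma>. ennreal (real (length (snd (\<sigma> i)))) \<partial>measure_pmf (mac_run (prot n) n gs t)) \<le> ennreal B"
    using queue_bound by blast
  show "\<exists>L. \<forall>s g. g < length gs \<longrightarrow> (\<forall>K. (\<Sum>k<K. measure_pmf.prob (mac_run (prot n) n gs (Suc s + k))
                   {\<sigma>. \<exists>i<n. (s, g) \<in> set (snd (\<sigma> i))}) \<le> L * measure_pmf.prob (gs ! g) {x. x \<noteq> None})"
  proof (intro exI allI impI)
    fix s g KK assume g: "g < length gs"
    let ?p = "measure_pmf.prob (gs ! g) {x. x \<noteq> None}"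
    have pk: "\<And>k. measure_pmf.prob (mac_run (prot n) n gs (Suc s + k)) {\<sigma>. \<exists>i<n. (s, g) \<in> set (snd (\<sigma> i))}
        \<le> \<rho> ^ k * (Dc * ?p)"
    proof -
      fix k
      have "measure_pmf.prob (mac_run (prot n) n gs (Suc s + k)) {\<sigma>. present n (s, g) \<sigma>} \<le> \<rho> ^ k * (Dc * ?p)"
        by (rule prob_le_F[OF tag_bound[OF g]]) (use r0 Dc0 in simp)
      then show "?thesis k" by (simp add: present_def)
    qed
    have "(\<Sum>k<KK. measure_pmf.prob (mac_run (prot n) n gs (Suc s + k)) {\<sigma>. \<exists>i<n. (s, g) \<in> set (snd (\<sigma> i))})
        \<le> (\<Sum>k<KK. \<rho> ^ k) * (Dc * ?p)"
      unfolding sum_distrib_right by (rule sum_mono) (rule pk)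
    also have "\<dots> \<le> (1 / (1 - \<rho>)) * (Dc * ?p)"
    proof (rule mult_right_mono)
      have "(\<Sum>k<KK. \<rho> ^ k) = (1 - \<rho> ^ KK) / (1 - \<rho>)" using r1 by (simp add: sum_gp_strict)
      also have "\<dots> \<le> 1 / (1 - \<rho>)" using r1 r0 by (intro divide_right_mono) simp_all
      finally show "(\<Sum>k<KK. \<rho> ^ k) \<le> 1 / (1 - \<rho>)" .
      show "0 \<le> Dc * ?p" using Dc0 by simp
    qed
    also have "\<dots> = Dc / (1 - \<rho>) * ?p" by simp
    finally show "(\<Sum>k<KK. measure_pmf.prob (mac_run (prot n) n gs (Suc s + k)) {\<sigma>. \<exists>i<n. (s, g) \<in> set (snd (\<sigma> i))})
        \<le> Dc / (1 - \<rho>) * ?p" .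
  qed
qed

end


theorem mainTheorem9:
  fixes lam :: real
  assumes "lam < 1 / exp 1"
  shows "\<exists>P :: nat \<Rightarrow> mac_protocol. \<forall>n gs.
           valid_gens n gs \<and> inj_rate gs = lam \<longrightarrow> mac_stable (P n) n gs"
proof (intro exI[of _ prot] allI impI)
  fix n gs assume h: "valid_gens n gs \<and> inj_rate gs = lam"
  show "mac_stable (prot n) n gs"
  proof (cases "n = 0")
    case True
    then show ?thesis unfolding mac_stable_def by (simp add: exI[of _ 0])
  next
    case False
    then have n0: "0 < n" by simp
    define l where "l = inj_rate gs"
    have l0: "0 \<le> l" unfolding l_def inj_rate_def by (intro sum_nonneg) simp
    have e52: "5/2 \<le> exp (1::real)" using exp_lower_Taylor_quadratic[of 1] by simp
    have l1: "l < 1 / exp 1" using h assms by (simp add: l_def)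
    have l25: "l * (5/2) < 1"
    proof -
      have "l * exp 1 < 1" using l1 by (simp add: field_simps)
      moreover have "l * (5/2) \<le> l * exp 1" using l0 e52 by (intro mult_left_mono)
      ultimately show ?thesis by linarith
    qed
    define q :: real where "q = (1/2)^n"
    have q0: "0 < q" "q \<le> 1" unfolding q_def by (simp_all add: power_le_one)
    define \<theta> where "\<theta> = q / 8"
    have th0: "0 < \<theta>" "\<theta> \<le> 1/8" using q0 by (simp_all add: \<theta>_def)
    define K where "K = exp (inj_rate gs * (exp (2 * \<theta>) - 1))"
    define Z where "Z = l * (exp (2 * \<theta>) - 1)"
    have KZ: "K = exp Z" by (simp add: K_def Z_def l_def)
    have "exp (2 * \<theta>) \<le> 1 + 2 * \<theta> + (2 * \<theta>)\<^sup>2" using th0 by (intro exp_bound) simp_all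
    then have "exp (2 * \<theta>) - 1 \<le> 2 * \<theta> + 4 * \<theta> * \<theta>" by (simp add: power2_eq_square)
    also have "\<dots> \<le> 2 * \<theta> + \<theta> / 2" using th0 by (simp add: mult_right_mono[of \<theta> "1/8" \<theta>, simplified] )
    finally have eb: "exp (2 * \<theta>) - 1 \<le> (5/2) * \<theta>" by simp
    have Z1: "Z < \<theta>"
    proof -
      have "Z \<le> l * ((5/2) * \<theta>)" unfolding Z_def using eb l0 by (intro mult_left_mono)
      also have "\<dots> = (l * (5/2)) * \<theta>" by simp
      also have "\<dots> < 1 * \<theta>" using l25 th0 by (intro mult_strict_right_mono) simp_all
      finally show ?thesis by simp
    qed
    define \<rho> where "\<rho> = max (exp (- \<theta>) * K) ((1 - (1/2)^n * (1 - exp (- 1))) * K)"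
    have r1: "\<rho> < 1"
    proof -
      have a: "exp (- \<theta>) * K < 1"
      proof -
        have "exp (- \<theta>) * K = exp (Z - \<theta>)" by (simp add: KZ exp_diff exp_minus field_simps)
        also have "\<dots> < 1" using Z1 by simp
        finally show ?thesis .
      qed
      have b: "(1 - (1/2)^n * (1 - exp (- 1))) * K < 1"
      proof -
        have em: "exp (-1::real) \<le> 1/2"
        proof -
          have "exp (-1::real) = 1 / exp 1" by (simp add: exp_minus field_simps)
          also have "\<dots> \<le> 1 / 2" using e52 by (simp add: divide_le_eq)
          finally show ?thesis .
        qed
        have "1 - q * (1 - exp (- 1)) \<le> exp (- (q * (1 - exp (- 1))))"
          using exp_ge_add_one_self[of "- (q * (1 - exp (- 1)))"] by simp
        then have "(1 - q * (1 - exp (- 1))) * K \<le> exp (- (q * (1 - exp (- 1)))) * K"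
          by (intro mult_right_mono) (simp_all add: KZ)
        also have "\<dots> = exp (Z - q * (1 - exp (- 1)))" unfolding KZ exp_add[symmetric] by simp
        also have "\<dots> < 1"
        proof -
          have "1/2 \<le> 1 - exp (-1::real)" using em by linarith
          then have "q * (1/2) \<le> q * (1 - exp (- 1))" using q0 by (intro mult_left_mono) simp_all
          then have "q / 2 \<le> q * (1 - exp (- 1))" by simp
          moreover have "Z < q / 8" using Z1 by (simp add: \<theta>_def)
          ultimately have "Z - q * (1 - exp (- 1)) < 0" using q0 by linarith
          then show ?thesis by simp
        qed
        finally have "(1 - q * (1 - exp (- 1))) * K < 1" .
        then show ?thesis by (simp only: q_def)
      qed
      show ?thesis using a b by (simp add: \<rho>_def)
    qed
    have hF: "exp (- \<theta>) * K \<le> \<rho>" unfolding \<rho>_def by (rule max.cobounded1)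
    have hS: "(1 - (1/2)^n * (1 - exp (- 1))) * K \<le> \<rho>" unfolding \<rho>_def by (rule max.cobounded2)
    show ?thesis
      by (rule stable[OF n0 th0(1) refl K_def hF hS r1])
  qed
qed

end
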